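(* Let $n>4$ be even and let $P=(A_1,\dots,A_n)$ be a cyclic $n$-gon (distinct vertices on a circle of radius $R$) with vertices ordered anticlockwise. Put $\delta_{pq}=|A_pA_q|$ and, for $m\in\{1,\dots,n\}$, \[\delta(m)=\prod_{\substack{i=1\\ i\ne m}}^{n-1}\ \prod_{\substack{j=i+1\\ j\ne m}}^{n}\delta_{ij}.\] Then: (i) for $m$ even, $2\le m\le n$, \[ \begin{aligned} \delta(m)={}&R^{\frac{n-2}{2}}\left(\prod_{k=1}^{m-1}\Big(\prod_{\substack{l=k+1\\ l\text{ even}}}^{m-1}S_{k,l,l+1}\prod_{\substack{l=m+1\\ l\text{ odd}}}^{n-1}S_{k,l,l+1}\Big)\right)\left(\prod_{k=m}^{n-3}\prod_{\substack{l=k+2\\ l\text{ odd}}}^{n-1}S_{k+1,l,l+1}\right)\\ &\cdot\left(\prod_{\substack{k=2\\ k\text{ even}}}^{m-1}\prod_{\substack{l=k+1\\ l\text{ even}}}^{m-1}\frac{R^2}{x_{l,l+1}}\right)\left(\prod_{\substack{k=m\\ k\text{ even}}}^{n-3}\prod_{\substack{l=k+2\\ l\text{ odd}}}^{n-1}\frac{R^2}{x_{l,l+1}}\right)\left(\prod_{\substack{l=m+1\\ l\text{ odd}}}^{n-1}\frac{R^{m-2}}{x_{l,l+1}^{\frac{m-2}{2}}}\right); \end{aligned} \] (ii) \[ \delta(1)=\left(\prod_{k=1}^{n-3}\prod_{\substack{l=k+2\\ l\text{ odd}}}^{n-1}S_{k+1,l,l+1}R\right)\left(\prod_{\substack{k=2\\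 k\text{ even}}}^{n-3}\prod_{\substack{l=k+2\\ l\text{ odd}}}^{n-1}\frac{1}{x_{l,l+1}}\right); \] (iii) \[ \delta(3)=S_{124}R\left(\prod_{\substack{l=5\\ l\text{ odd}}}^{n-1}S_{1,l,l+1}S_{2,l,l+1}R^2\right)\left(\prod_{k=3}^{n-3}\prod_{\substack{l=k+2\\ l\text{ odd}}}^{n-1}S_{k+1,l,l+1}R\right)\left(\prod_{\substack{k=3\\ k\text{ odd}}}^{n-3}\prod_{\substack{l=k+2\\ l\text{ odd}}}^{n-1}\frac{1}{x_{l,l+1}}\right); \] (iv) for $m$ odd, $3<m\le n-1$, \[ \begin{aligned} \delta(m)={}&\frac{S_{1,2,m-1}S_{1,2,m+1}R^2}{x_{12}}\left(\prod_{\substack{l=2\\ l\text{ even}}}^{m-2}S_{1,l,l+1}R\right)\left(\prod_{\substack{l=m+2\\ l\text{ odd}}}^{n-1}S_{1,l,l+1}R\right)\left(\prod_{\substack{l=m+2\\ l\text{ odd}}}^{n-1}\frac{S_{m-1,l,l+1}S_{m-3,l,l+1}R^2}{x_{l,l+1}}\right)\\ &\cdot\left(\prod_{\substack{k=3\\ k\text{ odd}}}^{m-4}\Big(\frac{S_{k,k+1,m-1}S_{k,k+1,m+1}R^2}{x_{k,k+1}}\prod_{\substack{l=k+1\\ l\text{ even}}}^{m-2}\frac{S_{k,l,l+1}R}{x_{l,l+1}}\prod_{\substack{l=m+2\\ l\text{ odd}}}^{n-1}\frac{1}{x_{l,l+1}}\Big)\right)\left(\prod_{\substack{k=2\\ k\text{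 even}}}^{m-5}\prod_{\substack{l=k+2\\ l\text{ even}}}^{m-2}S_{k,l,l+1}R\right)\\ &\cdot\left(\prod_{k=2}^{m-4}\prod_{\substack{l=m+2\\ l\text{ odd}}}^{n-1}S_{k,l,l+1}R\right)S_{m-2,m-1,m+1}R\left(\prod_{\substack{l=m+2\\ l\text{ odd}}}^{n-1}\frac{S_{m-2,l,l+1}R}{x_{l,l+1}}\right)\left(\prod_{\substack{k=m\\ k\text{ odd}}}^{n-3}S_{k+1,k+2,k+3}R\right)\\ &\cdot\left(\prod_{k=m}^{n-3}\prod_{\substack{l=k+3\\ l\text{ odd}}}^{n-1}S_{k+1,l,l+1}R\right)\left(\prod_{\substack{k=m\\ k\text{ odd}}}^{n-3}\prod_{\substack{l=k+3\\ l\text{ odd}}}^{n-1}\frac{1}{x_{l,l+1}}\right). \end{aligned} \]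
   Context: For points $A_p=(x_p,y_p)$, $x_{pq}:=(x_q-x_p)^2+(y_q-y_p)^2=\delta_{pq}^2$ is the squared distance between $A_p$ and $A_q$, and $S_{pqr}:=2[(x_q-x_p)(y_r-y_p)-(y_q-y_p)(x_r-x_p)]$ is four times the signed area of triangle $A_pA_qA_r$. A product $\prod_{\alpha}^{\beta}$ with $\alpha>\beta$ (or with no index of the required parity in range) equals $1$; "$k$ (resp. $l$) even/odd" restricts a product to indices of that parity. *)

theory Defs
  imports Complex_Main
begin

type_synonym point = "real \<times> real"

definition xsq :: "(nat \<Rightarrow> point) \<Rightarrow> nat \<Rightarrow> nat \<Rightarrow> real" where
  "xsq A p q = (fst (A q) - fst (A p))^2 + (snd (A q) - snd (A p))^2"

definition dl :: "(nat \<Rightarrow> point) \<Rightarrow> nat \<Rightarrow> nat \<Rightarrow> real" where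
  "dl A p q = sqrt (xsq A p q)"

text \<open>Four times the signed area of triangle A_p A_q A_r.\<close>
definition Sar :: "(nat \<Rightarrow> point) \<Rightarrow> nat \<Rightarrow> nat \<Rightarrow> nat \<Rightarrow> real" where
  "Sar A p q r = 2 * ((fst (A q) - fst (A p)) * (snd (A r) - snd (A p))
                    - (snd (A q) - snd (A p)) * (fst (A r) - fst (A p)))"

definition delta_m :: "(nat \<Rightarrow> point) \<Rightarrow> nat \<Rightarrow> nat \<Rightarrow> real" where
  "delta_m A n m = (\<Prod>i\<in>{1..n-1}-{m}. \<Prod>j\<in>{i+1..n}-{m}. dl A i j)"

definition prod_ev :: "nat \<Rightarrow> nat \<Rightarrow> (nat \<Rightarrow> real) \<Rightarrow> real" where
  "prod_ev a b f = (\<Prod>l\<in>{l\<in>{a..b}. even l}. f l)"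

definition prod_od :: "nat \<Rightarrow> nat \<Rightarrow> (nat \<Rightarrow> real) \<Rightarrow> real" where
  "prod_od a b f = (\<Prod>l\<in>{l\<in>{a..b}. odd l}. f l)"

text \<open>A_1..A_n are distinct points on the circle of radius R (centre c), in anticlockwise
  order: their polar angles about the centre can be chosen strictly increasing and
  within one full turn.\<close>
definition cyclic_anticlockwise :: "(nat \<Rightarrow> point) \<Rightarrow> nat \<Rightarrow> real \<Rightarrow> bool" where
  "cyclic_anticlockwise A n R \<longleftrightarrow> R > 0 \<and> inj_on A {1..n} \<and>
     (\<exists>c::point. \<exists>\<theta>::nat \<Rightarrow> real.
        (\<forall>i\<in>{1..n}. A i = (fst c + R * cos (\<theta> i), snd c + R * sin (\<theta> i))) \<and>
        (\<forall>i\<in>{1..<n}. \<theta> i < \<theta> (i+1)) \<and> \<theta> n < \<theta> 1 + 2 * pi)"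

end

theory Submission
  imports Defs
begin

lemma trig3: "sin (2*u) + sin (2*v) - sin (2*u + 2*v) = 4 * sin u * sin v * sin (u+v::real)"
proof -
  have e: "2*u + 2*v = 2*(u+v)" by simp
  have a: "(sin u)^2 + (cos u)^2 = 1" "(sin v)^2 + (cos v)^2 = 1"
    by simp_all
  show ?thesis unfolding e sin_double cos_double sin_add cos_add
    using a by algebra
qed

lemma theta_mono:
  assumes "\<forall>i\<in>{1..<n}. (th::nat\<Rightarrow>real) i < th (i+1)" "1 \<le> p" "p < q" "q \<le> n"
  shows "th p < th q"
  using assms(3,4)
proof (induction q)
  case 0 then show ?case by simp
next
  case (Suc q)
  have s: "th q < th (Suc q)" using assms(1,2) Suc.prems by auto
  show ?case
  proof (cases "p = q")
    case True then show ?thesis using s by simp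
  next
    case False then have "p < q" using Suc.prems by simp
    then show ?thesis using Suc.IH Suc.prems s by simp
  qed
qed

lemma chord:
  fixes a b R c1 c2 :: real
  assumes "R > 0" "a < b" "b < a + 2*pi"
  shows "sqrt ((c1 + R * cos b - (c1 + R * cos a))^2 + (c2 + R * sin b - (c2 + R * sin a))^2)
           = 2 * R * sin ((b - a)/2)"
    and "sin ((b - a)/2) > 0"
proof -
  define w where "w = (b - a)/2"
  have w: "0 < w" "w < pi" using assms unfolding w_def by auto
  have sw: "sin w > 0" using w by (simp add: sin_gt_zero)
  have ba: "b = a + 2*w" unfolding w_def by (simp add: field_simps)
  have "(c1 + R * cos b - (c1 + R * cos a))^2 + (c2 + R * sin b - (c2 + R * sin a))^2
        = (2 * R * sin w)^2"
    unfolding ba cos_add sin_add sin_double cos_double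
    using sin_cos_squared_add[of a] sin_cos_squared_add[of w] by algebra
  then show "sqrt ((c1 + R * cos b - (c1 + R * cos a))^2 + (c2 + R * sin b - (c2 + R * sin a))^2)
           = 2 * R * sin ((b - a)/2)" using sw assms(1) by (simp add: w_def)
  show "sin ((b - a)/2) > 0" using sw w_def by simp
qed

lemma geo:
  assumes "cyclic_anticlockwise A n R"
  shows "R > 0"
    and "\<forall>p q. 1 \<le> p \<and> p < q \<and> q \<le> n \<longrightarrow> dl A p q > 0"
    and "\<forall>p q r. 1 \<le> p \<and> p < q \<and> q < r \<and> r \<le> n \<longrightarrow>
            Sar A p q r * R = dl A p q * dl A q r * dl A p r"
    and "\<forall>l. xsq A l (l+1) = (dl A l (l+1))^2"
proof -
  show R: "R > 0" using assms unfolding cyclic_anticlockwise_def by simp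
  obtain c th where cA: "\<forall>i\<in>{1..n}. A i = (fst c + R * cos (th i), snd c + R * sin (th i))"
    and inc: "\<forall>i\<in>{1..<n}. th i < th (i+1)" and wr: "th n < th 1 + 2 * pi"
    using assms unfolding cyclic_anticlockwise_def by blast
  have rng: "th p < th q \<and> th q < th p + 2*pi" if "1 \<le> p" "p < q" "q \<le> n" for p q
  proof -
    have "th p < th q" using theta_mono[OF inc that] .
    moreover have "th 1 \<le> th p" using theta_mono[OF inc, of 1 p] that
      by (cases "p = 1") auto
    moreover have "th q \<le> th n" using theta_mono[OF inc, of q n] that
      by (cases "q = n") auto
    ultimately show ?thesis using wr by simp
  qed
  have dlf: "dl A p q = 2 * R * sin ((th q - th p)/2) \<and> sin ((th q - th p)/2) > 0"
    if "1 \<le> p" "p < q" "q \<le> n" for p q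
  proof -
    have "A p = (fst c + R * cos (th p), snd c + R * sin (th p))"
         "A q = (fst c + R * cos (th q), snd c + R * sin (th q))" using cA that by auto
    then show ?thesis using chord(1)[OF R, of "th p" "th q" "fst c" "snd c"] chord(2)[OF R, of "th p" "th q"] rng[OF that]
      unfolding dl_def xsq_def by simp
  qed
  show "\<forall>p q. 1 \<le> p \<and> p < q \<and> q \<le> n \<longrightarrow> dl A p q > 0"
    using dlf R by auto
  show "\<forall>l. xsq A l (l+1) = (dl A l (l+1))^2"
    unfolding dl_def xsq_def by simp
  show "\<forall>p q r. 1 \<le> p \<and> p < q \<and> q < r \<and> r \<le> n \<longrightarrow>
            Sar A p q r * R = dl A p q * dl A q r * dl A p r"
  proof (intro allI impI)
    fix p q r assume h: "1 \<le> p \<and> p < q \<and> q < r \<and> r \<le> n"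
    have e1: "dl A p q = 2 * R * sin ((th q - th p)/2)" using dlf h by simp
    have e2: "dl A q r = 2 * R * sin ((th r - th q)/2)" using dlf h by simp
    have e3: "dl A p r = 2 * R * sin ((th r - th p)/2)" using dlf h by simp
    have Ap: "A p = (fst c + R * cos (th p), snd c + R * sin (th p))"
     and Aq: "A q = (fst c + R * cos (th q), snd c + R * sin (th q))"
     and Ar: "A r = (fst c + R * cos (th r), snd c + R * sin (th r))" using cA h by auto
    define u where "u = (th q - th p)/2"
    define v where "v = (th r - th q)/2"
    have tq: "th q = th p + 2*u" and tr: "th r = th p + 2*u + 2*v" unfolding u_def v_def by (simp_all add: field_simps)
    have tr2: "(th r - th p)/2 = u + v" unfolding u_def v_def by (simp add: field_simps)
    have "Sar A p q r = 2 * R^2 * (sin (2*u) + sin (2*v) - sin (2*u + 2*v))"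
      unfolding Sar_def Ap Aq Ar tq tr fst_conv snd_conv
      unfolding sin_add cos_add using sin_cos_squared_add[of "th p"] sin_cos_squared_add[of "2*u"] sin_cos_squared_add[of "2*v"] by algebra
    then have "Sar A p q r = 8 * R^2 * sin u * sin v * sin (u+v)" unfolding trig3 by simp
    then show "Sar A p q r * R = dl A p q * dl A q r * dl A p r"
      unfolding e1 e2 e3 tr2 u_def[symmetric] v_def[symmetric] by (simp add: power2_eq_square)
  qed
qed

lemma pe_empty: "b < a \<Longrightarrow> prod_ev a b f = 1"
  unfolding prod_ev_def by simp
lemma po_empty: "b < a \<Longrightarrow> prod_od a b f = 1"
  unfolding prod_od_def by simp

lemma pe_single: "odd a \<Longrightarrow> prod_ev a a f = 1"
proof -
  assume "odd a"
  then have e: "{l\<in>{a..a}. even l} = {}" by auto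
  show ?thesis unfolding prod_ev_def e by simp
qed
lemma po_single: "even a \<Longrightarrow> prod_od a a f = 1"
proof -
  assume "even a"
  then have e: "{l\<in>{a..a}. odd l} = {}" by auto
  show ?thesis unfolding prod_od_def e by simp
qed

lemma pe_mult: "prod_ev a b (\<lambda>k. f k * g k) = prod_ev a b f * prod_ev a b g"
  unfolding prod_ev_def by (rule prod.distrib)
lemma po_mult: "prod_od a b (\<lambda>k. f k * g k) = prod_od a b f * prod_od a b g"
  unfolding prod_od_def by (rule prod.distrib)

lemma pe_add2_even: "even c \<Longrightarrow> a \<le> c+2 \<Longrightarrow> prod_ev a (c+2) f = prod_ev a c f * f (c+2)"
proof -
  assume h: "even c" "a \<le> c+2"
  have "{l\<in>{a..c+2}. even l} = insert (c+2) {l\<in>{a..c}. even l}"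
    using h by (auto simp: le_Suc_eq)
  then show ?thesis unfolding prod_ev_def by (simp add: mult.commute)
qed
lemma pe_add2_odd: "odd c \<Longrightarrow> a \<le> c+1 \<Longrightarrow> prod_ev a (c+2) f = prod_ev a c f * f (c+1)"
proof -
  assume h: "odd c" "a \<le> c+1"
  have "{l\<in>{a..c+2}. even l} = insert (c+1) {l\<in>{a..c}. even l}"
    using h by (auto simp: le_Suc_eq)
  then show ?thesis unfolding prod_ev_def by (simp add: mult.commute)
qed
lemma po_add2_odd: "odd c \<Longrightarrow> a \<le> c+2 \<Longrightarrow> prod_od a (c+2) f = prod_od a c f * f (c+2)"
proof -
  assume h: "odd c" "a \<le> c+2"
  have "{l\<in>{a..c+2}. odd l} = insert (c+2) {l\<in>{a..c}. odd l}"
    using h by (auto simp: le_Suc_eq)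
  then show ?thesis unfolding prod_od_def by (simp add: mult.commute)
qed
lemma po_add2_even: "even c \<Longrightarrow> a \<le> c+1 \<Longrightarrow> prod_od a (c+2) f = prod_od a c f * f (c+1)"
proof -
  assume h: "even c" "a \<le> c+1"
  have "{l\<in>{a..c+2}. odd l} = insert (c+1) {l\<in>{a..c}. odd l}"
    using h by (auto simp: le_Suc_eq)
  then show ?thesis unfolding prod_od_def by (simp add: mult.commute)
qed

lemma pe_po_split: "prod_ev a b f * prod_od a b f = (\<Prod>l\<in>{a..b}. f l)"
proof -
  have e: "{a..b} = {l\<in>{a..b}. even l} \<union> {l\<in>{a..b}. odd l}" by auto
  have "(\<Prod>l\<in>{a..b}. f l) = (\<Prod>l\<in>{l\<in>{a..b}. even l} \<union> {l\<in>{a..b}. odd l}. f l)"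
    by (subst e) (rule refl)
  also have "\<dots> = prod_ev a b f * prod_od a b f"
    unfolding prod_ev_def prod_od_def by (rule prod.union_disjoint) auto
  finally show ?thesis by simp
qed

lemma po_shift: "prod_od a b (\<lambda>k. f (Suc k)) = prod_ev (Suc a) (Suc b) f"
proof -
  have "{l\<in>{Suc a..Suc b}. even l} = Suc ` {l\<in>{a..b}. odd l}"
  proof
    show "{l\<in>{Suc a..Suc b}. even l} \<subseteq> Suc ` {l\<in>{a..b}. odd l}"
    proof
      fix l assume "l \<in> {l\<in>{Suc a..Suc b}. even l}"
      then have "l = Suc (l - 1)" "l - 1 \<in> {l\<in>{a..b}. odd l}" by auto
      then show "l \<in> Suc ` {l\<in>{a..b}. odd l}" by blast
    qed
  qed auto
  then show ?thesis unfolding prod_ev_def prod_od_def by (simp add: prod.reindex)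
qed
lemma pe_shift: "prod_ev a b (\<lambda>k. f (Suc k)) = prod_od (Suc a) (Suc b) f"
proof -
  have "{l\<in>{Suc a..Suc b}. odd l} = Suc ` {l\<in>{a..b}. even l}"
  proof
    show "{l\<in>{Suc a..Suc b}. odd l} \<subseteq> Suc ` {l\<in>{a..b}. even l}"
    proof
      fix l assume "l \<in> {l\<in>{Suc a..Suc b}. odd l}"
      then have "l = Suc (l - 1)" "l - 1 \<in> {l\<in>{a..b}. even l}" by auto
      then show "l \<in> Suc ` {l\<in>{a..b}. even l}" by blast
    qed
  qed auto
  then show ?thesis unfolding prod_ev_def prod_od_def by (simp add: prod.reindex)
qed

lemma card_od: "a \<le> b + 1 \<Longrightarrow> card {l\<in>{a..b}. odd l} = (b+1) div 2 - a div 2"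
proof (induction b)
  case 0
  have e: "{l\<in>{a..0::nat}. odd l} = {}" by (auto intro: odd_pos)
  show ?case unfolding e using 0 by auto
next
  case (Suc b)
  show ?case
  proof (cases "a = Suc (Suc b)")
    case True then show ?thesis by simp
  next
    case False
    then have ab: "a \<le> b + 1" using Suc.prems by simp
    have IH: "card {l\<in>{a..b}. odd l} = (b+1) div 2 - a div 2" using Suc.IH[OF ab] .
    have ad: "a div 2 \<le> (b+1) div 2" using ab by (simp add: div_le_mono)
    show ?thesis
    proof (cases "odd (Suc b)")
      case True
      then have "{l\<in>{a..Suc b}. odd l} = insert (Suc b) {l\<in>{a..b}. odd l}"
        using ab by (auto simp: le_Suc_eq)
      then have c: "card {l\<in>{a..Suc b}. odd l} = Suc (card {l\<in>{a..b}. odd l})" by simp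
      obtain k where k: "b = 2*k" using True by auto
      show ?thesis unfolding c IH using ad k by simp
    next
      case False
      then have "{l\<in>{a..Suc b}. odd l} = {l\<in>{a..b}. odd l}"
        using ab by (auto simp: le_Suc_eq)
      moreover obtain k where k: "b = 2*k+1" using False by (auto elim: oddE)
      ultimately show ?thesis using IH by simp
    qed
  qed
qed

lemma card_ev: "a \<le> b + 1 \<Longrightarrow> card {l\<in>{a..b}. even l} = (b+2) div 2 - (a+1) div 2"
proof (induction b)
  case 0
  show ?case
  proof (cases "a = 0")
    case True
    have e: "{l\<in>{a..0::nat}. even l} = {0}" using True by auto
    show ?thesis unfolding e using True by simp
  next
    case False
    have e: "{l\<in>{a..0::nat}. even l} = {}" using False by auto
    show ?thesis unfolding e using 0 False by simp
  qed
next
  case (Suc b)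
  show ?case
  proof (cases "a = Suc (Suc b)")
    case True then show ?thesis by simp
  next
    case False
    then have ab: "a \<le> b + 1" using Suc.prems by simp
    have IH: "card {l\<in>{a..b}. even l} = (b+2) div 2 - (a+1) div 2" using Suc.IH[OF ab] .
    have ad: "(a+1) div 2 \<le> (b+2) div 2" using ab by (simp add: div_le_mono)
    show ?thesis
    proof (cases "even (Suc b)")
      case True
      then have "{l\<in>{a..Suc b}. even l} = insert (Suc b) {l\<in>{a..b}. even l}"
        using ab by (auto simp: le_Suc_eq)
      then have c: "card {l\<in>{a..Suc b}. even l} = Suc (card {l\<in>{a..b}. even l})" by simp
      obtain k where k: "b = 2*k+1" using True by (auto elim: oddE)
      show ?thesis unfolding c IH using ad k by simp
    next
      case False
      then have "{l\<in>{a..Suc b}. even l} = {l\<in>{a..b}. even l}"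
        using ab by (auto simp: le_Suc_eq)
      moreover obtain k where k: "b = 2*k" using False by auto
      ultimately show ?thesis using IH by simp
    qed
  qed
qed

lemma pe_const: "a \<le> b + 1 \<Longrightarrow> prod_ev a b (\<lambda>_. c) = c ^ ((b+2) div 2 - (a+1) div 2)"
  unfolding prod_ev_def prod_constant by (simp only: card_ev)
lemma po_const: "a \<le> b + 1 \<Longrightarrow> prod_od a b (\<lambda>_. c) = c ^ ((b+1) div 2 - a div 2)"
  unfolding prod_od_def prod_constant by (simp only: card_od)

lemma outer:
  assumes "finite Kn" "Ko \<subseteq> Kn" "\<forall>k\<in>Kn-Ko. Fo k = (1::real)" "\<forall>k\<in>Kn. Fn k = Fo k * G k"
  shows "prod Fn Kn = prod Fo Ko * prod G Kn"
proof -
  have "prod Fn Kn = prod Fo Kn * prod G Kn"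
    using assms(4) by (simp add: prod.distrib[symmetric])
  moreover have "prod Fo Kn = prod Fo Ko"
    using assms(1-3) by (intro prod.mono_neutral_right) auto
  ultimately show ?thesis by simp
qed

definition QS :: "(nat \<Rightarrow> nat \<Rightarrow> real) \<Rightarrow> nat set \<Rightarrow> real" where
  "QS d X = (\<Prod>i\<in>X. \<Prod>j\<in>{j\<in>X. i < j}. d i j)"

lemma QS_top:
  assumes "finite X" "\<forall>i\<in>X. i < a"
  shows "QS d (insert a X) = QS d X * (\<Prod>i\<in>X. d i a)"
proof -
  have an: "a \<notin> X" using assms by auto
  have "QS d (insert a X) = (\<Prod>j\<in>{j\<in>insert a X. a < j}. d a j) * (\<Prod>i\<in>X. \<Prod>j\<in>{j\<in>insert a X. i < j}. d i j)"
    unfolding QS_def using assms(1) an by simp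
  also have "{j\<in>insert a X. a < j} = {}" using assms by auto
  also have "(\<Prod>i\<in>X. \<Prod>j\<in>{j\<in>insert a X. i < j}. d i j) = (\<Prod>i\<in>X. (\<Prod>j\<in>{j\<in>X. i < j}. d i j) * d i a)"
  proof (rule prod.cong)
    fix i assume i: "i \<in> X"
    have "{j\<in>insert a X. i < j} = insert a {j\<in>X. i < j}" using i assms by auto
    then show "(\<Prod>j\<in>{j\<in>insert a X. i < j}. d i j) = (\<Prod>j\<in>{j\<in>X. i < j}. d i j) * d i a"
      using assms(1) an by (simp add: mult.commute)
  qed simp
  finally show ?thesis unfolding QS_def by (simp add: prod.distrib)
qed

lemma QS_step:
  assumes "m \<noteq> n+1" "m \<noteq> n+2"
  shows "QS d ({1..n+2}-{m}) = QS d ({1..n}-{m}) * (\<Prod>i\<in>{1..n}-{m}. d i (n+1) * d i (n+2)) * d (n+1) (n+2)"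
proof -
  let ?X = "{1..n}-{m}"
  have e: "{1..n+2}-{m} = insert (n+2) (insert (n+1) ?X)" using assms by auto
  have "QS d ({1..n+2}-{m}) = QS d (insert (n+1) ?X) * (\<Prod>i\<in>insert (n+1) ?X. d i (n+2))"
    unfolding e by (rule QS_top) auto
  also have "QS d (insert (n+1) ?X) = QS d ?X * (\<Prod>i\<in>?X. d i (n+1))"
    by (rule QS_top) auto
  also have "(\<Prod>i\<in>insert (n+1) ?X. d i (n+2)) = d (n+1) (n+2) * (\<Prod>i\<in>?X. d i (n+2))"
    by simp
  finally show ?thesis by (simp add: prod.distrib)
qed

lemma delta_QS: "n \<ge> 1 \<Longrightarrow> delta_m A n m = QS (dl A) ({1..n}-{m})"
proof -
  assume n: "n \<ge> 1"
  have "delta_m A n m = (\<Prod>i\<in>{1..n}-{m}. \<Prod>j\<in>{j\<in>{1..n}-{m}. i < j}. dl A i j)"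
  proof -
    have "(\<Prod>i\<in>{1..n}-{m}. \<Prod>j\<in>{j\<in>{1..n}-{m}. i < j}. dl A i j)
        = (\<Prod>i\<in>{1..n-1}-{m}. \<Prod>j\<in>{j\<in>{1..n}-{m}. i < j}. dl A i j)"
    proof (rule prod.mono_neutral_right)
      show "\<forall>i\<in>{1..n} - {m} - ({1..n - 1} - {m}). (\<Prod>j\<in>{j\<in>{1..n}-{m}. i < j}. dl A i j) = 1"
      proof
        fix i assume "i \<in> {1..n} - {m} - ({1..n - 1} - {m})"
        then have "i = n" by auto
        then have e: "{j\<in>{1..n}-{m}. i < j} = {}" by auto
        show "(\<Prod>j\<in>{j\<in>{1..n}-{m}. i < j}. dl A i j) = 1" by (simp only: e prod.empty)
      qed
    qed auto
    also have "\<dots> = (\<Prod>i\<in>{1..n-1}-{m}. \<Prod>j\<in>{i+1..n}-{m}. dl A i j)"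
    proof (rule prod.cong[OF refl])
      fix i assume "i \<in> {1..n-1}-{m}"
      have e: "{j\<in>{1..n}-{m}. i < j} = {i+1..n}-{m}" by auto
      show "(\<Prod>j\<in>{j\<in>{1..n}-{m}. i < j}. dl A i j) = (\<Prod>j\<in>{i+1..n}-{m}. dl A i j)"
        by (simp only: e)
    qed
    finally show ?thesis unfolding delta_m_def by (rule sym)
  qed
  then show ?thesis unfolding QS_def .
qed

lemma alg1:
  fixes R D P :: real
  assumes "R > 0" "D > 0"
  shows "R * (P * D^(2*s+2*t+1) / R^(2*s+2*t+1)) * (R^2/D^2)^t * (R^(2*s)/(D^2)^s) = P * D"
proof -
  have "(R^2/D^2)^t = R^(2*t) / D^(2*t)" by (simp add: power_divide power_mult)
  moreover have "(D^2)^s = D^(2*s)" by (simp add: power_mult)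
  ultimately show ?thesis using assms by (simp add: field_simps power_add)
qed

locale cfg =
  fixes d :: "nat \<Rightarrow> nat \<Rightarrow> real" and S :: "nat \<Rightarrow> nat \<Rightarrow> nat \<Rightarrow> real"
    and x :: "nat \<Rightarrow> nat \<Rightarrow> real" and R :: real and N :: nat
  assumes Rpos: "R > 0"
    and dpos: "\<And>p q. 1 \<le> p \<Longrightarrow> p < q \<Longrightarrow> q \<le> N \<Longrightarrow> d p q > 0"
    and SR: "\<And>p q r. 1 \<le> p \<Longrightarrow> p < q \<Longrightarrow> q < r \<Longrightarrow> r \<le> N \<Longrightarrow> S p q r * R = d p q * d q r * d p r"
    and xd: "\<And>l. x l (l+1) = (d l (l+1))^2"
begin

lemma collect:
  assumes "finite I" "\<forall>i\<in>I. 1 \<le> i \<and> i < a" "a+1 \<le> N"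
  shows "(\<Prod>i\<in>I. S i a (a+1) * R) = (\<Prod>i\<in>I. d i a * d i (a+1)) * d a (a+1) ^ card I"
proof -
  have "(\<Prod>i\<in>I. S i a (a+1) * R) = (\<Prod>i\<in>I. (d i a * d i (a+1)) * d a (a+1))"
  proof (rule prod.cong[OF refl])
    fix i assume "i \<in> I"
    then have "S i a (a+1) * R = d i a * d a (a+1) * d i (a+1)" using assms by (intro SR) auto
    then show "S i a (a+1) * R = (d i a * d i (a+1)) * d a (a+1)" by simp
  qed
  then show ?thesis by (simp add: prod.distrib)
qed

lemma collect':
  assumes "finite I" "\<forall>i\<in>I. 1 \<le> i \<and> i < a" "a+1 \<le> N"
  shows "(\<Prod>i\<in>I. S i a (a+1)) = (\<Prod>i\<in>I. d i a * d i (a+1)) * d a (a+1) ^ card I / R ^ card I"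
proof -
  have "(\<Prod>i\<in>I. S i a (a+1) * R) = (\<Prod>i\<in>I. S i a (a+1)) * R ^ card I"
    by (simp add: prod.distrib)
  then show ?thesis using collect[OF assms] Rpos by (simp add: field_simps)
qed

end

definition rhs1 :: "(nat \<Rightarrow> nat \<Rightarrow> nat \<Rightarrow> real) \<Rightarrow> (nat \<Rightarrow> nat \<Rightarrow> real) \<Rightarrow> real \<Rightarrow> nat \<Rightarrow> nat \<Rightarrow> real" where
 "rhs1 S x R n m =
        R ^ ((n - 2) div 2)
      * (\<Prod>k\<in>{1..m-1}. prod_ev (k+1) (m-1) (\<lambda>l. S k l (l+1))
                         * prod_od (m+1) (n-1) (\<lambda>l. S k l (l+1)))
      * (\<Prod>k\<in>{m..n-3}. prod_od (k+2) (n-1) (\<lambda>l. S (k+1) l (l+1)))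
      * prod_ev 2 (m-1) (\<lambda>k. prod_ev (k+1) (m-1) (\<lambda>l. R^2 / x l (l+1)))
      * prod_ev m (n-3) (\<lambda>k. prod_od (k+2) (n-1) (\<lambda>l. R^2 / x l (l+1)))
      * prod_od (m+1) (n-1) (\<lambda>l. R^(m-2) / x l (l+1) ^ ((m-2) div 2))"

context cfg begin

lemma step1:
  assumes "even n" "even m" "2 \<le> m" "m \<le> n" "n+2 \<le> N"
  shows "rhs1 S x R (n+2) m = rhs1 S x R n m * (\<Prod>i\<in>{1..n}-{m}. d i (n+1) * d i (n+2)) * d (n+1) (n+2)"
proof -
  obtain k where k: "m = 2*k" using assms(2) by blast
  define s where "s = k - 1"
  have s: "m = 2*s+2" using k assms(3) unfolding s_def by simp
  have "even (n - m)" using assms(1,2,4) by simp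
  then obtain t where t0: "n - m = 2*t" by blast
  have t: "n = m + 2*t" using t0 assms(4) by simp
  have on: "odd (n-1)" "n - 1 + 2 = n + 1" using assms by auto
  have T1: "R ^ ((n+2-2) div 2) = R ^ ((n-2) div 2) * R" using assms by (simp add: s t)
  have T2: "(\<Prod>k\<in>{1..m-1}. prod_ev (k+1) (m-1) (\<lambda>l. S k l (l+1)) * prod_od (m+1) (n+2-1) (\<lambda>l. S k l (l+1)))
     = (\<Prod>k\<in>{1..m-1}. prod_ev (k+1) (m-1) (\<lambda>l. S k l (l+1)) * prod_od (m+1) (n-1) (\<lambda>l. S k l (l+1)))
       * (\<Prod>k\<in>{1..m-1}. S k (n+1) (n+2))"
  proof -
    have "prod_od (m+1) (n+2-1) g = prod_od (m+1) (n-1) g * g (n+1)" for g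
      using po_add2_odd[OF on(1), of "m+1" g] on assms by simp
    then show ?thesis by (simp add: prod.distrib mult.assoc)
  qed
  have T3: "(\<Prod>k\<in>{m..n+2-3}. prod_od (k+2) (n+2-1) (\<lambda>l. S (k+1) l (l+1)))
     = (\<Prod>k\<in>{m..n-3}. prod_od (k+2) (n-1) (\<lambda>l. S (k+1) l (l+1))) * (\<Prod>k\<in>{m..n-1}. S (k+1) (n+1) (n+2))"
  proof -
    have e: "n+2-3 = n-1" using assms by simp
    show ?thesis unfolding e
    proof (rule outer)
      show "\<forall>k\<in>{m..n-1} - {m..n-3}. prod_od (k+2) (n-1) (\<lambda>l. S (k+1) l (l+1)) = 1"
        using assms by (auto intro!: po_empty)
      show "\<forall>k\<in>{m..n-1}. prod_od (k+2) (n+2-1) (\<lambda>l. S (k+1) l (l+1)) = prod_od (k+2) (n-1) (\<lambda>l. S (k+1) l (l+1)) * S (k+1) (n+1) (n+2)"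
        using po_add2_odd[OF on(1)] on assms by auto
    qed auto
  qed
  have T5: "prod_ev m (n+2-3) (\<lambda>k. prod_od (k+2) (n+2-1) (\<lambda>l. R^2 / x l (l+1)))
     = prod_ev m (n-3) (\<lambda>k. prod_od (k+2) (n-1) (\<lambda>l. R^2 / x l (l+1))) * prod_ev m (n-1) (\<lambda>k. R^2 / x (n+1) (n+2))"
  proof -
    have e: "n+2-3 = n-1" using assms by simp
    show ?thesis unfolding e prod_ev_def
    proof (rule outer)
      show "\<forall>k\<in>{l\<in>{m..n-1}. even l} - {l\<in>{m..n-3}. even l}. prod_od (k+2) (n-1) (\<lambda>l. R^2 / x l (l+1)) = 1"
        using assms by (auto intro!: po_empty)
      show "\<forall>k\<in>{l\<in>{m..n-1}. even l}. prod_od (k+2) (n+2-1) (\<lambda>l. R^2 / x l (l+1)) = prod_od (k+2) (n-1) (\<lambda>l. R^2 / x l (l+1)) * (R^2 / x (n+1) (n+2))"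
        using po_add2_odd[OF on(1)] on assms by auto
    qed auto
  qed
  have T6: "prod_od (m+1) (n+2-1) (\<lambda>l. R^(m-2) / x l (l+1) ^ ((m-2) div 2))
     = prod_od (m+1) (n-1) (\<lambda>l. R^(m-2) / x l (l+1) ^ ((m-2) div 2)) * (R^(m-2) / x (n+1) (n+2) ^ ((m-2) div 2))"
    using po_add2_odd[OF on(1), of "m+1"] on assms by simp
  define Rat where "Rat = R * (\<Prod>k\<in>{1..m-1}. S k (n+1) (n+2)) * (\<Prod>k\<in>{m..n-1}. S (k+1) (n+1) (n+2))
      * prod_ev m (n-1) (\<lambda>k. R^2 / x (n+1) (n+2)) * (R^(m-2) / x (n+1) (n+2) ^ ((m-2) div 2))"
  have A: "rhs1 S x R (n+2) m = rhs1 S x R n m * Rat"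
    unfolding rhs1_def T1 T2 T3 T5 T6 Rat_def by (simp only: mult_ac)
  let ?D = "d (n+1) (n+2)"
  let ?P = "\<Prod>i\<in>{1..n}-{m}. d i (n+1) * d i (n+2)"
  have P3: "(\<Prod>k\<in>{m..n-1}. S (k+1) (n+1) (n+2)) = (\<Prod>i\<in>{m+1..n}. S i (n+1) (n+2))"
  proof -
    have "{m+1..n} = {Suc m..Suc (n-1)}" using assms by auto
    then show ?thesis by (simp only: prod.shift_bounds_cl_Suc_ivl) simp
  qed
  have U: "(\<Prod>k\<in>{1..m-1}. S k (n+1) (n+2)) * (\<Prod>i\<in>{m+1..n}. S i (n+1) (n+2)) = (\<Prod>i\<in>{1..n}-{m}. S i (n+1) (n+2))"
  proof -
    have "{1..n}-{m} = {1..m-1} \<union> {m+1..n}" using assms by auto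
    then show ?thesis by (simp add: prod.union_disjoint)
  qed
  have C: "(\<Prod>i\<in>{1..n}-{m}. S i (n+1) (n+2)) = ?P * ?D ^ (n-1) / R ^ (n-1)"
  proof -
    have "card ({1..n}-{m}) = n - 1" using assms by simp
    then show ?thesis using collect'[of "{1..n}-{m}" "n+1"] assms by auto
  qed
  have K: "prod_ev m (n-1) (\<lambda>k. R^2 / x (n+1) (n+2)) = (R^2 / ?D^2)^t"
    using pe_const[of m "n-1"] xd[of "n+1"] assms by (simp add: s t)
  have Dp: "?D > 0" using dpos assms by simp
  have xD: "x (n+1) (n+2) = ?D^2" using xd[of "n+1"] by simp
  have "Rat = R * (\<Prod>i\<in>{1..n}-{m}. S i (n+1) (n+2)) * (R^2/?D^2)^t * (R^(m-2) / x (n+1) (n+2) ^ ((m-2) div 2))"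
    unfolding Rat_def P3 K by (simp only: U[symmetric] mult.assoc)
  also have "\<dots> = R * (?P * ?D ^ (n-1) / R ^ (n-1)) * (R^2 / ?D^2)^t * (R^(2*s) / (?D^2) ^ s)"
    unfolding C xD by (simp add: s)
  also have "\<dots> = ?P * ?D"
  proof -
    have "n - 1 = 2*s+2*t+1" using s t by simp
    then show ?thesis using alg1[OF Rpos Dp] by simp
  qed
  finally show ?thesis using A by simp
qed

end

lemma rhs1_diag:
  assumes "2 \<le> m"
  shows "rhs1 S x R m m = R ^ ((m-2) div 2) * (\<Prod>k\<in>{1..m-1}. prod_ev (k+1) (m-1) (\<lambda>l. S k l (l+1)))
     * prod_ev 2 (m-1) (\<lambda>k. prod_ev (k+1) (m-1) (\<lambda>l. R^2 / x l (l+1)))"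
  unfolding rhs1_def using assms by (simp add: po_empty pe_empty)

context cfg begin

lemma base1:
  assumes "even m" "2 \<le> m" "m+2 \<le> N"
  shows "rhs1 S x R (m+2) (m+2) = rhs1 S x R m m * (\<Prod>i\<in>{1..m-1}. d i m * d i (m+1)) * d m (m+1)"
proof -
  obtain k where k: "m = 2*k" using assms(1) by blast
  define s where "s = k - 1"
  have s: "m = 2*s+2" using k assms(2) unfolding s_def by simp
  have om: "odd (m-1)" "m - 1 + 2 = m + 1" "m+2-1 = m+1" "m+2-2 = m" using assms by auto
  have E1: "(\<Prod>k\<in>{1..m+1}. prod_ev (k+1) (m+1) (\<lambda>l. S k l (l+1)))
      = (\<Prod>k\<in>{1..m-1}. prod_ev (k+1) (m-1) (\<lambda>l. S k l (l+1))) * (\<Prod>k\<in>{1..m-1}. S k m (m+1))"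
  proof -
    have "(\<Prod>k\<in>{1..m+1}. prod_ev (k+1) (m+1) (\<lambda>l. S k l (l+1))) = (\<Prod>k\<in>{1..m-1}. prod_ev (k+1) (m+1) (\<lambda>l. S k l (l+1)))"
    proof (rule prod.mono_neutral_right)
      show "\<forall>i\<in>{1..m + 1} - {1..m - 1}. prod_ev (i + 1) (m + 1) (\<lambda>l. S i l (l + 1)) = 1"
      proof
        fix i assume "i \<in> {1..m + 1} - {1..m - 1}"
        then have "i = m \<or> i = m+1" using assms by auto
        then show "prod_ev (i + 1) (m + 1) (\<lambda>l. S i l (l + 1)) = 1"
          using assms by (auto intro: pe_single pe_empty)
      qed
    qed auto
    also have "\<dots> = (\<Prod>k\<in>{1..m-1}. prod_ev (k+1) (m-1) (\<lambda>l. S k l (l+1)) * S k m (m+1))"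
    proof (rule prod.cong[OF refl])
      fix i assume "i \<in> {1..m-1}"
      then show "prod_ev (i + 1) (m + 1) (\<lambda>l. S i l (l + 1)) = prod_ev (i+1) (m-1) (\<lambda>l. S i l (l+1)) * S i m (m+1)"
        using pe_add2_odd[OF om(1), of "i+1"] om by simp
    qed
    finally show ?thesis by (simp add: prod.distrib)
  qed
  have E2: "prod_ev 2 (m+1) (\<lambda>k. prod_ev (k+1) (m+1) (\<lambda>l. R^2 / x l (l+1)))
      = prod_ev 2 (m-1) (\<lambda>k. prod_ev (k+1) (m-1) (\<lambda>l. R^2 / x l (l+1))) * prod_ev 2 (m-1) (\<lambda>k. R^2 / x m (m+1))"
  proof -
    have "prod_ev 2 (m+1) (\<lambda>k. prod_ev (k+1) (m+1) (\<lambda>l. R^2 / x l (l+1)))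
       = prod_ev 2 (m-1) (\<lambda>k. prod_ev (k+1) (m+1) (\<lambda>l. R^2 / x l (l+1))) * prod_ev (m+1) (m+1) (\<lambda>l. R^2 / x l (l+1))"
      using pe_add2_odd[OF om(1), of 2] om assms by simp
    also have "prod_ev (m+1) (m+1) (\<lambda>l. R^2 / x l (l+1)) = 1" using assms by (simp add: pe_single)
    also have "prod_ev 2 (m-1) (\<lambda>k. prod_ev (k+1) (m+1) (\<lambda>l. R^2 / x l (l+1)))
       = prod_ev 2 (m-1) (\<lambda>k. prod_ev (k+1) (m-1) (\<lambda>l. R^2 / x l (l+1)) * (R^2 / x m (m+1)))"
      unfolding prod_ev_def[of 2]
    proof (rule prod.cong[OF refl])
      fix i assume "i \<in> {l\<in>{2..m-1}. even l}"
      then show "prod_ev (i + 1) (m + 1) (\<lambda>l. R^2 / x l (l+1)) = prod_ev (i+1) (m-1) (\<lambda>l. R^2 / x l (l+1)) * (R^2 / x m (m+1))"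
        using pe_add2_odd[OF om(1), of "i+1"] om by simp
    qed
    finally show ?thesis by (simp only: pe_mult mult_1_right)
  qed
  have T1: "R ^ ((m+2-2) div 2) = R ^ ((m-2) div 2) * R" using s by simp
  let ?D = "d m (m+1)"
  let ?P = "\<Prod>i\<in>{1..m-1}. d i m * d i (m+1)"
  have A: "rhs1 S x R (m+2) (m+2) = rhs1 S x R m m * (R * (\<Prod>k\<in>{1..m-1}. S k m (m+1)) * prod_ev 2 (m-1) (\<lambda>k. R^2 / x m (m+1)))"
  proof -
    have D2: "rhs1 S x R (m+2) (m+2) = R ^ ((m+2-2) div 2) * (\<Prod>k\<in>{1..m+1}. prod_ev (k+1) (m+1) (\<lambda>l. S k l (l+1)))
       * prod_ev 2 (m+1) (\<lambda>k. prod_ev (k+1) (m+1) (\<lambda>l. R^2 / x l (l+1)))"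
      using rhs1_diag[where m="m+2" and S=S and x=x and R=R] by simp
    show ?thesis unfolding D2 rhs1_diag[OF assms(2)] T1 E1 E2 by (simp only: mult_ac)
  qed
  have C: "(\<Prod>i\<in>{1..m-1}. S i m (m+1)) = ?P * ?D ^ (m-1) / R ^ (m-1)"
  proof -
    have h: "\<forall>i\<in>{1..m-1}. 1 \<le> i \<and> i < m" using assms by auto
    have "m + 1 \<le> N" using assms by simp
    from collect'[OF _ h this] show ?thesis by simp
  qed
  have xD: "x m (m+1) = ?D^2" using xd[of m] by simp
  have K: "prod_ev 2 (m-1) (\<lambda>k. R^2 / x m (m+1)) = (R^2 / ?D^2)^s"
    unfolding xD using pe_const[of 2 "m-1"] by (simp add: s)
  have Dp: "?D > 0" using dpos assms by simp
  have "R * (\<Prod>k\<in>{1..m-1}. S k m (m+1)) * prod_ev 2 (m-1) (\<lambda>k. R^2 / x m (m+1)) = ?P * ?D"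
  proof -
    have "m - 1 = 2*0+2*s+1" using s by simp
    then show ?thesis unfolding C K using alg1[OF Rpos Dp, of ?P 0 s] by simp
  qed
  then show ?thesis using A by (simp add: mult.assoc)
qed

end

context cfg begin

lemma diag1:
  assumes "even m" "2 \<le> m" "m \<le> N"
  shows "QS d ({1..m}-{m}) = rhs1 S x R m m"
proof -
  obtain k where k: "m = 2*k" using assms(1) by blast
  define s where "s = k - 1"
  have s: "m = 2*s+2" using k assms(2) unfolding s_def by simp
  have "2*s+2 \<le> N \<longrightarrow> QS d ({1..2*s+2}-{2*s+2}) = rhs1 S x R (2*s+2) (2*s+2)" for s
  proof (induction s)
    case 0
    have e: "{1..2*0+2::nat}-{2*0+2} = {1}" by auto
    have r: "rhs1 S x R (2*0+2) (2*0+2) = 1" by (simp add: rhs1_def pe_empty po_empty)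
    have z: "{j. j = Suc 0 \<and> Suc 0 < j} = {}" by auto
    show ?case unfolding e r by (simp add: QS_def z)
  next
    case (Suc s)
    let ?m = "2*s+2"
    show ?case
    proof
      assume h: "2 * Suc s + 2 \<le> N"
      have e1: "{1..2 * Suc s + 2} - {2 * Suc s + 2} = {1..?m+1} - {?m+2}" by auto
      have e2: "{1..?m-1} - {?m+2} = {1..?m}-{?m}" by auto
      have e3: "?m - 1 + 1 = ?m" "?m - 1 + 2 = ?m + 1" by auto
      have "QS d ({1..2 * Suc s + 2} - {2 * Suc s + 2}) = QS d ({1..?m}-{?m}) * (\<Prod>i\<in>{1..?m-1}. d i ?m * d i (?m+1)) * d ?m (?m+1)"
      proof -
        have p: "?m+2 \<noteq> ?m-1+1" "?m+2 \<noteq> ?m-1+2" by auto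
        note q = QS_step[of "?m+2" "?m-1" d, OF p, unfolded e3]
        have e4: "{1..?m-1} - {?m+2} = {1..?m-1}" by auto
        have "QS d ({1..?m-1} - {?m+2}) = QS d ({1..?m}-{?m})" using e2 by simp
        then show ?thesis unfolding e1 q e4 by (simp only:)
      qed
      also have "\<dots> = rhs1 S x R ?m ?m * (\<Prod>i\<in>{1..?m-1}. d i ?m * d i (?m+1)) * d ?m (?m+1)"
        using Suc.IH h by simp
      also have "\<dots> = rhs1 S x R (?m+2) (?m+2)"
        using base1[of ?m] h by simp
      finally show "QS d ({1..2 * Suc s + 2} - {2 * Suc s + 2}) = rhs1 S x R (2 * Suc s + 2) (2 * Suc s + 2)"
        by (simp add: mult_2 add_ac)
    qed
  qed
  then show ?thesis using assms s by simp
qed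

lemma case1:
  assumes "even n" "even m" "2 \<le> m" "m \<le> n" "n \<le> N"
  shows "QS d ({1..n}-{m}) = rhs1 S x R n m"
proof -
  have "even (n - m)" using assms by simp
  then obtain t where t0: "n - m = 2*t" by blast
  have t: "n = m + 2*t" using t0 assms(4) by simp
  have "m + 2*t \<le> N \<longrightarrow> QS d ({1..m+2*t}-{m}) = rhs1 S x R (m+2*t) m" for t
  proof (induction t)
    case 0
    then show ?case using diag1 assms by simp
  next
    case (Suc t)
    show ?case
    proof
      assume h: "m + 2 * Suc t \<le> N"
      have e: "m + 2 * Suc t = (m + 2*t) + 2" by simp
      have "QS d ({1..m + 2 * Suc t}-{m}) = QS d ({1..m+2*t}-{m}) * (\<Prod>i\<in>{1..m+2*t}-{m}. d i (m+2*t+1) * d i (m+2*t+2)) * d (m+2*t+1) (m+2*t+2)"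
        unfolding e by (rule QS_step) auto
      also have "\<dots> = rhs1 S x R (m + 2 * Suc t) m"
        unfolding e using Suc.IH h step1[of "m+2*t" m] assms by simp
      finally show "QS d ({1..m + 2 * Suc t}-{m}) = rhs1 S x R (m + 2 * Suc t) m" .
    qed
  qed
  then show ?thesis using t assms by simp
qed

end

lemma alg2:
  fixes D P :: real
  assumes "D > 0"
  shows "P * D^(2*u+1) * (1/D^2)^u = P * D"
proof -
  have "(1/D^2)^u = 1 / D^(2*u)" by (simp add: power_divide power_mult)
  then show ?thesis using assms by (simp add: field_simps power_add)
qed

lemma QS_one: "QS d {1} = 1"
proof -
  have z: "{j. j = Suc 0 \<and> Suc 0 < j} = {}" by auto
  show ?thesis by (simp add: QS_def z)
qed

definition rhs2 :: "(nat \<Rightarrow> nat \<Rightarrow> nat \<Rightarrow> real) \<Rightarrow> (nat \<Rightarrow> nat \<Rightarrow> real) \<Rightarrow> real \<Rightarrow> nat \<Rightarrow> real" where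
 "rhs2 S x R n =
        (\<Prod>k\<in>{1..n-3}. prod_od (k+2) (n-1) (\<lambda>l. S (k+1) l (l+1) * R))
      * prod_ev 2 (n-3) (\<lambda>k. prod_od (k+2) (n-1) (\<lambda>l. 1 / x l (l+1)))"

definition rhs3 :: "(nat \<Rightarrow> nat \<Rightarrow> nat \<Rightarrow> real) \<Rightarrow> (nat \<Rightarrow> nat \<Rightarrow> real) \<Rightarrow> real \<Rightarrow> nat \<Rightarrow> real" where
 "rhs3 S x R n =
        S 1 2 4 * R
      * prod_od 5 (n-1) (\<lambda>l. S 1 l (l+1) * S 2 l (l+1) * R^2)
      * (\<Prod>k\<in>{3..n-3}. prod_od (k+2) (n-1) (\<lambda>l. S (k+1) l (l+1) * R))
      * prod_od 3 (n-3) (\<lambda>k. prod_od (k+2) (n-1) (\<lambda>l. 1 / x l (l+1)))"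

lemma outer_iv:
  assumes "even n" "2 \<le> n"
  shows "(\<Prod>k\<in>{m..n+2-3}. prod_od (k+2) (n+2-1) (g k)) = (\<Prod>k\<in>{m..n-3}. prod_od (k+2) (n-1) (g k)) * (\<Prod>k\<in>{m..n-1}. g k (n+1))"
proof -
  have on: "odd (n-1)" "n - 1 + 2 = n + 1" using assms by auto
  have e: "n+2-3 = n-1" using assms by simp
  show ?thesis unfolding e
  proof (rule outer)
    show "\<forall>k\<in>{m..n-1} - {m..n-3}. prod_od (k+2) (n-1) (g k) = 1"
      using assms by (auto intro!: po_empty)
    show "\<forall>k\<in>{m..n-1}. prod_od (k+2) (n+2-1) (g k) = prod_od (k+2) (n-1) (g k) * g k (n+1)"
      using po_add2_odd[OF on(1)] on assms by auto
  qed auto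
qed

lemma outer_ev:
  assumes "even n" "2 \<le> n"
  shows "prod_ev m (n+2-3) (\<lambda>k. prod_od (k+2) (n+2-1) (g k)) = prod_ev m (n-3) (\<lambda>k. prod_od (k+2) (n-1) (g k)) * prod_ev m (n-1) (\<lambda>k. g k (n+1))"
proof -
  have on: "odd (n-1)" "n - 1 + 2 = n + 1" using assms by auto
  have e: "n+2-3 = n-1" using assms by simp
  show ?thesis unfolding e prod_ev_def
  proof (rule outer)
    show "\<forall>k\<in>{l\<in>{m..n-1}. even l} - {l\<in>{m..n-3}. even l}. prod_od (k+2) (n-1) (g k) = 1"
      using assms by (auto intro!: po_empty)
    show "\<forall>k\<in>{l\<in>{m..n-1}. even l}. prod_od (k+2) (n+2-1) (g k) = prod_od (k+2) (n-1) (g k) * g k (n+1)"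
      using po_add2_odd[OF on(1)] on assms by auto
  qed auto
qed

lemma outer_od:
  assumes "even n" "2 \<le> n"
  shows "prod_od m (n+2-3) (\<lambda>k. prod_od (k+2) (n+2-1) (g k)) = prod_od m (n-3) (\<lambda>k. prod_od (k+2) (n-1) (g k)) * prod_od m (n-1) (\<lambda>k. g k (n+1))"
proof -
  have on: "odd (n-1)" "n - 1 + 2 = n + 1" using assms by auto
  have e: "n+2-3 = n-1" using assms by simp
  show ?thesis unfolding e prod_od_def[of m]
  proof (rule outer)
    show "\<forall>k\<in>{l\<in>{m..n-1}. odd l} - {l\<in>{m..n-3}. odd l}. prod_od (k+2) (n-1) (g k) = 1"
      using assms by (auto intro!: po_empty)
    show "\<forall>k\<in>{l\<in>{m..n-1}. odd l}. prod_od (k+2) (n+2-1) (g k) = prod_od (k+2) (n-1) (g k) * g k (n+1)"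
      using po_add2_odd[OF on(1)] on assms by auto
  qed auto
qed

context cfg begin

lemma step2:
  assumes "even n" "2 \<le> n" "n+2 \<le> N"
  shows "rhs2 S x R (n+2) = rhs2 S x R n * (\<Prod>i\<in>{1..n}-{1}. d i (n+1) * d i (n+2)) * d (n+1) (n+2)"
proof -
  obtain k where k: "n = 2*k" using assms(1) by blast
  define u where "u = k - 1"
  have u: "n = 2*u+2" using k assms(2) unfolding u_def by simp
  let ?D = "d (n+1) (n+2)"
  let ?P = "\<Prod>i\<in>{1..n}-{1}. d i (n+1) * d i (n+2)"
  have A: "rhs2 S x R (n+2) = rhs2 S x R n * ((\<Prod>k\<in>{1..n-1}. S (k+1) (n+1) (n+2) * R) * prod_ev 2 (n-1) (\<lambda>k. 1 / x (n+1) (n+2)))"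
  proof -
    have e12: "n+1+1 = n+2" by simp
    show ?thesis unfolding rhs2_def outer_iv[OF assms(1,2)] outer_ev[OF assms(1,2)] e12 by (simp only: mult_ac)
  qed
  have P3: "(\<Prod>k\<in>{1..n-1}. S (k+1) (n+1) (n+2) * R) = (\<Prod>i\<in>{1..n}-{1}. S i (n+1) (n+2) * R)"
  proof -
    have "{1..n}-{1} = {Suc 1..Suc (n-1)}" using assms by auto
    then show ?thesis by (simp only: prod.shift_bounds_cl_Suc_ivl) simp
  qed
  have C: "(\<Prod>i\<in>{1..n}-{1}. S i (n+1) (n+2) * R) = ?P * ?D ^ (n-1)"
  proof -
    have h: "\<forall>i\<in>{1..n}-{1}. 1 \<le> i \<and> i < n+1" by auto
    have c: "card ({1..n}-{1}) = n - 1" using assms by simp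
    from collect[OF _ h] assms show ?thesis unfolding c by simp
  qed
  have xD: "x (n+1) (n+2) = ?D^2" using xd[of "n+1"] by simp
  have K: "prod_ev 2 (n-1) (\<lambda>k. 1 / x (n+1) (n+2)) = (1 / ?D^2)^u"
    unfolding xD using pe_const[of 2 "n-1"] by (simp add: u)
  have Dp: "?D > 0" using dpos assms by simp
  have "(\<Prod>k\<in>{1..n-1}. S (k+1) (n+1) (n+2) * R) * prod_ev 2 (n-1) (\<lambda>k. 1 / x (n+1) (n+2)) = ?P * ?D"
  proof -
    have "n - 1 = 2*u+1" using u by simp
    then show ?thesis unfolding P3 C K using alg2[OF Dp, of ?P u] by simp
  qed
  then show ?thesis using A by (simp add: mult.assoc)
qed

lemma case2:
  assumes "even n" "2 \<le> n" "n \<le> N"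
  shows "QS d ({1..n}-{1}) = rhs2 S x R n"
proof -
  obtain k where k: "n = 2*k" using assms(1) by blast
  define u where "u = k - 1"
  have u: "n = 2*u+2" using k assms(2) unfolding u_def by simp
  have "2*u+2 \<le> N \<longrightarrow> QS d ({1..2*u+2}-{1}) = rhs2 S x R (2*u+2)" for u
  proof (induction u)
    case 0
    have e: "{1..2*0+2::nat}-{1} = insert 2 {}" by auto
    have r: "rhs2 S x R (2*0+2) = 1" by (simp add: rhs2_def pe_empty po_empty)
    have q: "QS d (insert 2 {}) = 1" using QS_top[of "{}" 2 d] by (simp add: QS_def)
    show ?case unfolding e r q by simp
  next
    case (Suc u)
    show ?case
    proof
      assume h: "2 * Suc u + 2 \<le> N"
      have e: "2 * Suc u + 2 = (2*u+2) + 2" by simp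
      have "QS d ({1..2 * Suc u + 2}-{1}) = QS d ({1..2*u+2}-{1}) * (\<Prod>i\<in>{1..2*u+2}-{1}. d i (2*u+2+1) * d i (2*u+2+2)) * d (2*u+2+1) (2*u+2+2)"
        unfolding e by (rule QS_step) auto
      also have "\<dots> = rhs2 S x R (2 * Suc u + 2)"
        unfolding e using Suc.IH h step2[of "2*u+2"] by simp
      finally show "QS d ({1..2 * Suc u + 2}-{1}) = rhs2 S x R (2 * Suc u + 2)" .
    qed
  qed
  then show ?thesis using u assms by simp
qed

lemma step3:
  assumes "even n" "4 \<le> n" "n+2 \<le> N"
  shows "rhs3 S x R (n+2) = rhs3 S x R n * (\<Prod>i\<in>{1..n}-{3}. d i (n+1) * d i (n+2)) * d (n+1) (n+2)"
proof -
  obtain k where k: "n = 2*k" using assms(1) by blast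
  define u where "u = k - 1"
  have u: "n = 2*u+2" using k assms(2) unfolding u_def by simp
  have n2: "2 \<le> n" using assms by simp
  have on: "odd (n-1)" "n - 1 + 2 = n + 1" "n+2-1 = n - 1 + 2" using assms by auto
  let ?D = "d (n+1) (n+2)"
  let ?P = "\<Prod>i\<in>{1..n}-{3}. d i (n+1) * d i (n+2)"
  have T: "prod_od 5 (n+2-1) (\<lambda>l. S 1 l (l+1) * S 2 l (l+1) * R^2) = prod_od 5 (n-1) (\<lambda>l. S 1 l (l+1) * S 2 l (l+1) * R^2) * (S 1 (n+1) (n+2) * S 2 (n+1) (n+2) * R^2)"
    unfolding on(3) using po_add2_odd[OF on(1), of 5] on assms by simp
  have A: "rhs3 S x R (n+2) = rhs3 S x R n * ((S 1 (n+1) (n+2) * S 2 (n+1) (n+2) * R^2) * (\<Prod>k\<in>{3..n-1}. S (k+1) (n+1) (n+2) * R) * prod_od 3 (n-1) (\<lambda>k. 1 / x (n+1) (n+2)))"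
  proof -
    have e12: "n+1+1 = n+2" by simp
    show ?thesis unfolding rhs3_def T outer_iv[OF assms(1) n2] outer_od[OF assms(1) n2] e12 by (simp only: mult_ac)
  qed
  have P3: "(S 1 (n+1) (n+2) * S 2 (n+1) (n+2) * R^2) * (\<Prod>k\<in>{3..n-1}. S (k+1) (n+1) (n+2) * R) = (\<Prod>i\<in>{1..n}-{3}. S i (n+1) (n+2) * R)"
  proof -
    have "{4..n} = {Suc 3..Suc (n-1)}" using assms by auto
    then have a: "(\<Prod>k\<in>{3..n-1}. S (k+1) (n+1) (n+2) * R) = (\<Prod>i\<in>{4..n}. S i (n+1) (n+2) * R)"
      by (simp only: prod.shift_bounds_cl_Suc_ivl) simp
    have "{1..n}-{3} = insert 1 (insert 2 {4..n})" using assms by auto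
    then have b: "(\<Prod>i\<in>{1..n}-{3}. S i (n+1) (n+2) * R) = (S 1 (n+1) (n+2) * R) * ((S 2 (n+1) (n+2) * R) * (\<Prod>i\<in>{4..n}. S i (n+1) (n+2) * R))"
      by simp
    show ?thesis unfolding a b by (simp add: power2_eq_square mult_ac)
  qed
  have C: "(\<Prod>i\<in>{1..n}-{3}. S i (n+1) (n+2) * R) = ?P * ?D ^ (n-1)"
  proof -
    have h: "\<forall>i\<in>{1..n}-{3}. 1 \<le> i \<and> i < n+1" by auto
    have c: "card ({1..n}-{3}) = n - 1" using assms by simp
    from collect[OF _ h] assms show ?thesis unfolding c by simp
  qed
  have xD: "x (n+1) (n+2) = ?D^2" using xd[of "n+1"] by simp
  have K: "prod_od 3 (n-1) (\<lambda>k. 1 / x (n+1) (n+2)) = (1 / ?D^2)^u"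
    unfolding xD using po_const[of 3 "n-1"] assms by (simp add: u)
  have Dp: "?D > 0" using dpos assms by simp
  have "(S 1 (n+1) (n+2) * S 2 (n+1) (n+2) * R^2) * (\<Prod>k\<in>{3..n-1}. S (k+1) (n+1) (n+2) * R) * prod_od 3 (n-1) (\<lambda>k. 1 / x (n+1) (n+2)) = ?P * ?D"
  proof -
    have "n - 1 = 2*u+1" using u by simp
    then show ?thesis unfolding P3 C K using alg2[OF Dp, of ?P u] by simp
  qed
  then show ?thesis using A by (simp add: mult.assoc)
qed

lemma case3:
  assumes "even n" "4 \<le> n" "n \<le> N"
  shows "QS d ({1..n}-{3}) = rhs3 S x R n"
proof -
  obtain k where k: "n = 2*k" using assms(1) by blast
  define u where "u = k - 2"
  have u: "n = 2*u+4" using k assms(2) unfolding u_def by simp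
  have "2*u+4 \<le> N \<longrightarrow> QS d ({1..2*u+4}-{3}) = rhs3 S x R (2*u+4)" for u
  proof (induction u)
    case 0
    have e: "{1..2*0+4::nat}-{3} = insert 4 (insert 2 {1})" by auto
    have r: "rhs3 S x R (2*0+4) = S 1 2 4 * R" by (simp add: rhs3_def pe_empty po_empty)
    have q: "QS d (insert 4 (insert 2 {1})) = d 1 2 * (d 1 4 * d 2 4)"
      using QS_top[of "insert 2 {1}" 4 d] QS_top[of "{1}" 2 d] QS_one[of d] by simp
    show ?case unfolding e r q using SR[of 1 2 4] by simp
  next
    case (Suc u)
    show ?case
    proof
      assume h: "2 * Suc u + 4 \<le> N"
      have e: "2 * Suc u + 4 = (2*u+4) + 2" by simp
      have "QS d ({1..2 * Suc u + 4}-{3}) = QS d ({1..2*u+4}-{3}) * (\<Prod>i\<in>{1..2*u+4}-{3}. d i (2*u+4+1) * d i (2*u+4+2)) * d (2*u+4+1) (2*u+4+2)"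
        unfolding e by (rule QS_step) auto
      also have "\<dots> = rhs3 S x R (2 * Suc u + 4)"
        unfolding e using Suc.IH h step3[of "2*u+4"] by simp
      finally show "QS d ({1..2 * Suc u + 4}-{3}) = rhs3 S x R (2 * Suc u + 4)" .
    qed
  qed
  then show ?thesis using u assms by simp
qed

end

definition rhs4 :: "(nat \<Rightarrow> nat \<Rightarrow> nat \<Rightarrow> real) \<Rightarrow> (nat \<Rightarrow> nat \<Rightarrow> real) \<Rightarrow> real \<Rightarrow> nat \<Rightarrow> nat \<Rightarrow> real" where
 "rhs4 S x R n m =
        S 1 2 (m-1) * S 1 2 (m+1) * R^2 / x 1 2
      * prod_ev 2 (m-2) (\<lambda>l. S 1 l (l+1) * R)
      * prod_od (m+2) (n-1) (\<lambda>l. S 1 l (l+1) * R)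
      * prod_od (m+2) (n-1) (\<lambda>l. S (m-1) l (l+1) * S (m-3) l (l+1) * R^2 / x l (l+1))
      * prod_od 3 (m-4) (\<lambda>k. S k (k+1) (m-1) * S k (k+1) (m+1) * R^2 / x k (k+1)
                              * prod_ev (k+1) (m-2) (\<lambda>l. S k l (l+1) * R / x l (l+1))
                              * prod_od (m+2) (n-1) (\<lambda>l. 1 / x l (l+1)))
      * prod_ev 2 (m-5) (\<lambda>k. prod_ev (k+2) (m-2) (\<lambda>l. S k l (l+1) * R))
      * (\<Prod>k\<in>{2..m-4}. prod_od (m+2) (n-1) (\<lambda>l. S k l (l+1) * R))
      * S (m-2) (m-1) (m+1) * R
      * prod_od (m+2) (n-1) (\<lambda>l. S (m-2) l (l+1) * R / x l (l+1))
      * prod_od m (n-3) (\<lambda>k. S (k+1) (k+2) (k+3) * R)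
      * (\<Prod>k\<in>{m..n-3}. prod_od (k+3) (n-1) (\<lambda>l. S (k+1) l (l+1) * R))
      * prod_od m (n-3) (\<lambda>k. prod_od (k+3) (n-1) (\<lambda>l. 1 / x l (l+1)))"

lemma po_mult_assoc: "prod_od a b (\<lambda>k. f k * (X * c)) = prod_od a b (\<lambda>k. f k * X) * prod_od a b (\<lambda>k. c)"
  unfolding prod_od_def by (simp only: mult.assoc[symmetric] prod.distrib)

lemma split_iv:
  fixes f :: "nat \<Rightarrow> real"
  assumes "5 \<le> m" "m + 1 \<le> n"
  shows "(\<Prod>i\<in>{1..n}-{m}. f i) = f 1 * (\<Prod>i\<in>{2..m-4}. f i) * f (m-3) * f (m-2) * f (m-1) * (\<Prod>i\<in>{m+1..n-1}. f i) * f n"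
proof -
  obtain k where k: "m = k + 5" using assms(1) le_Suc_ex by (metis add.commute)
  obtain n' where n': "n = Suc n'" using assms by (cases n) auto
  have e: "{1..n}-{m} = {1..k+4} \<union> {k+6..n}" using k assms by auto
  have u: "(\<Prod>i\<in>{1..n}-{m}. f i) = (\<Prod>i\<in>{1..k+4}. f i) * (\<Prod>i\<in>{k+6..n}. f i)"
    unfolding e by (rule prod.union_disjoint) auto
  have a: "(\<Prod>i\<in>{1..k+4}. f i) = f 1 * (\<Prod>i\<in>{2..k+1}. f i) * f (k+2) * f (k+3) * f (k+4)"
  proof -
    have s1: "Suc 1 = 2" by simp
    have "(\<Prod>i\<in>{1..k+4}. f i) = f 1 * (\<Prod>i\<in>{2..k+4}. f i)" by (rule prod.atLeast_Suc_atMost[of 1 "k+4" f, unfolded s1]) simp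
    moreover have "(\<Prod>i\<in>{2..k+4}. f i) = (\<Prod>i\<in>{2..k+1}. f i) * f (k+2) * f (k+3) * f (k+4)"
    proof -
      have t: "a \<le> b+1 \<Longrightarrow> prod f {a..b+1} = prod f {a..b} * f (b+1)" for a b
        by (simp add: prod.cl_ivl_Suc)
      have e2: "k+1+1 = k+2" "k+2+1 = k+3" "k+3+1 = k+4" by simp_all
      have "(\<Prod>i\<in>{2..k+4}. f i) = (\<Prod>i\<in>{2..k+3}. f i) * f (k+4)" by (rule t[of 2 "k+3", unfolded e2]) simp
      also have "(\<Prod>i\<in>{2..k+3}. f i) = (\<Prod>i\<in>{2..k+2}. f i) * f (k+3)" by (rule t[of 2 "k+2", unfolded e2]) simp
      also have "(\<Prod>i\<in>{2..k+2}. f i) = (\<Prod>i\<in>{2..k+1}. f i) * f (k+2)" by (rule t[of 2 "k+1", unfolded e2]) simp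
      finally show ?thesis .
    qed
    ultimately show ?thesis by (simp only: mult.assoc)
  qed
  have b: "(\<Prod>i\<in>{k+6..n}. f i) = (\<Prod>i\<in>{k+6..n-1}. f i) * f n"
    using assms k n' by (simp add: prod.cl_ivl_Suc)
  have ms: "m-4 = k+1" "m-3 = k+2" "m-2 = k+3" "m-1 = k+4" "m+1 = k+6" using k by simp_all
  show ?thesis unfolding u a b ms by (simp only: mult_ac)
qed

lemma outer11:
  assumes "even n" "m + 1 \<le> n" "1 \<le> m"
  shows "(\<Prod>k\<in>{m..n+2-3}. prod_od (k+3) (n+2-1) (g k)) = (\<Prod>k\<in>{m..n-3}. prod_od (k+3) (n-1) (g k)) * (\<Prod>k\<in>{m..n-2}. g k (n+1))"
proof -
  have on: "odd (n-1)" "n - 1 + 2 = n + 1" "n+2-1 = n-1+2" using assms by auto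
  have e: "n+2-3 = Suc (n-2)" using assms by simp
  have "(\<Prod>k\<in>{m..n+2-3}. prod_od (k+3) (n+2-1) (g k)) = (\<Prod>k\<in>{m..n-2}. prod_od (k+3) (n+2-1) (g k)) * prod_od (Suc (n-2)+3) (n+2-1) (g (Suc (n-2)))"
  proof -
    have nl: "m \<le> Suc (n-2)" using assms by simp
    show ?thesis unfolding e using nl by (simp add: prod.cl_ivl_Suc)
  qed
  also have "prod_od (Suc (n-2)+3) (n+2-1) (g (Suc (n-2))) = 1" using assms by (intro po_empty) simp
  also have "(\<Prod>k\<in>{m..n-2}. prod_od (k+3) (n+2-1) (g k)) = (\<Prod>k\<in>{m..n-3}. prod_od (k+3) (n-1) (g k)) * (\<Prod>k\<in>{m..n-2}. g k (n+1))"
  proof (rule outer)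
    show "\<forall>k\<in>{m..n-2} - {m..n-3}. prod_od (k+3) (n-1) (g k) = 1"
      using assms by (auto intro!: po_empty)
    show "\<forall>k\<in>{m..n-2}. prod_od (k+3) (n+2-1) (g k) = prod_od (k+3) (n-1) (g k) * g k (n+1)"
      unfolding on(3) using po_add2_odd[OF on(1)] on assms by auto
  qed auto
  finally show ?thesis by simp
qed

lemma outer12:
  assumes "even n" "m + 1 \<le> n" "odd m" "3 \<le> m"
  shows "prod_od m (n+2-3) (\<lambda>k. prod_od (k+3) (n+2-1) h) = prod_od m (n-3) (\<lambda>k. prod_od (k+3) (n-1) h) * prod_od m (n-3) (\<lambda>k. h (n+1))"
proof -
  have on: "odd (n-1)" "n - 1 + 2 = n + 1" "n+2-1 = n-1+2" using assms by (auto elim: oddE)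
  have n3: "odd (n-3)" "n-3+2 = n+2-3" "m \<le> n-3+2" using assms by (auto elim: oddE)
  have "prod_od m (n+2-3) (\<lambda>k. prod_od (k+3) (n+2-1) h) = prod_od m (n-3) (\<lambda>k. prod_od (k+3) (n+2-1) h) * prod_od (n-3+2+3) (n+2-1) h"
    using po_add2_odd[OF n3(1) n3(3), of "\<lambda>k. prod_od (k+3) (n+2-1) h"] unfolding n3(2) by simp
  also have "prod_od (n-3+2+3) (n+2-1) h = 1" using assms by (intro po_empty) auto
  also have "prod_od m (n-3) (\<lambda>k. prod_od (k+3) (n+2-1) h) = prod_od m (n-3) (\<lambda>k. prod_od (k+3) (n-1) h * h (n+1))"
    unfolding prod_od_def[of m]
  proof (rule prod.cong[OF refl])
    fix k assume "k \<in> {l\<in>{m..n-3}. odd l}"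
    then show "prod_od (k+3) (n+2-1) h = prod_od (k+3) (n-1) h * h (n+1)"
      unfolding on(3) using po_add2_odd[OF on(1), of "k+3" h] on assms by auto
  qed
  finally show ?thesis by (simp add: po_mult)
qed

context cfg begin

lemma step4:
  assumes "even n" "odd m" "5 \<le> m" "m + 1 \<le> n" "n+2 \<le> N"
  shows "rhs4 S x R (n+2) m = rhs4 S x R n m * (\<Prod>i\<in>{1..n}-{m}. d i (n+1) * d i (n+2)) * d (n+1) (n+2)"
proof -
  obtain k where k: "m = 2*k+1" using assms(2) by (auto elim: oddE)
  define p where "p = k - 2"
  have p: "m = 2*p+5" using k assms(3) unfolding p_def by simp
  have "even (n - m - 1)" using assms by auto
  then obtain q where q0: "n - m - 1 = 2*q" by blast
  have q: "n = 2*p+6+2*q" using q0 p assms by simp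
  have n2: "2 \<le> n" using assms by simp
  have on: "odd (n-1)" "n+2-1 = n-1+2" "m+2 \<le> n-1+2" "n-1+2 = n+1" using assms by auto
  have PO: "\<And>f. prod_od (m+2) (n+2-1) f = prod_od (m+2) (n-1) f * f (n+1)"
    using po_add2_odd[OF on(1,3), unfolded on(4)] by simp
  let ?a = "n+1" and ?b = "n+2"
  have e12: "n+1+1 = n+2" by simp
  let ?h = "\<lambda>l. 1 / x l (l+1)"
  have A3: "prod_od (m+2) (n+2-1) (\<lambda>l. S 1 l (l+1) * R) = prod_od (m+2) (n-1) (\<lambda>l. S 1 l (l+1) * R) * (S 1 ?a ?b * R)"
    unfolding PO by simp
  have A4: "prod_od (m+2) (n+2-1) (\<lambda>l. S (m-1) l (l+1) * S (m-3) l (l+1) * R^2 / x l (l+1))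
     = prod_od (m+2) (n-1) (\<lambda>l. S (m-1) l (l+1) * S (m-3) l (l+1) * R^2 / x l (l+1)) * (S (m-1) ?a ?b * S (m-3) ?a ?b * R^2 / x ?a ?b)"
    unfolding PO by simp
  have H: "prod_od (m+2) (n+2-1) ?h = prod_od (m+2) (n-1) ?h * (1 / x ?a ?b)"
    unfolding PO by simp
  have A5: "prod_od 3 (m-4) (\<lambda>k. S k (k+1) (m-1) * S k (k+1) (m+1) * R^2 / x k (k+1)
                              * prod_ev (k+1) (m-2) (\<lambda>l. S k l (l+1) * R / x l (l+1))
                              * prod_od (m+2) (n+2-1) ?h)
      = prod_od 3 (m-4) (\<lambda>k. S k (k+1) (m-1) * S k (k+1) (m+1) * R^2 / x k (k+1)
                              * prod_ev (k+1) (m-2) (\<lambda>l. S k l (l+1) * R / x l (l+1))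
                              * prod_od (m+2) (n-1) ?h) * prod_od 3 (m-4) (\<lambda>k. 1 / x ?a ?b)"
    unfolding H by (rule po_mult_assoc)
  have A7: "(\<Prod>k\<in>{2..m-4}. prod_od (m+2) (n+2-1) (\<lambda>l. S k l (l+1) * R))
     = (\<Prod>k\<in>{2..m-4}. prod_od (m+2) (n-1) (\<lambda>l. S k l (l+1) * R)) * (\<Prod>k\<in>{2..m-4}. S k ?a ?b * R)"
  proof -
    have "(\<Prod>k\<in>{2..m-4}. prod_od (m+2) (n+2-1) (\<lambda>l. S k l (l+1) * R))
       = (\<Prod>k\<in>{2..m-4}. prod_od (m+2) (n-1) (\<lambda>l. S k l (l+1) * R) * (S k ?a ?b * R))"
      unfolding PO by simp
    then show ?thesis by (simp only: prod.distrib)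
  qed
  have A9: "prod_od (m+2) (n+2-1) (\<lambda>l. S (m-2) l (l+1) * R / x l (l+1))
     = prod_od (m+2) (n-1) (\<lambda>l. S (m-2) l (l+1) * R / x l (l+1)) * (S (m-2) ?a ?b * R / x ?a ?b)"
    unfolding PO by simp
  have A10: "prod_od m (n+2-3) (\<lambda>k. S (k+1) (k+2) (k+3) * R) = prod_od m (n-3) (\<lambda>k. S (k+1) (k+2) (k+3) * R) * (S n ?a ?b * R)"
  proof -
    have n3: "odd (n-3)" "n+2-3 = n-3+2" "m \<le> n-3+2" "n-3+2+1 = n" "n-3+2+2 = n+1" "n-3+2+3 = n+2"
      using assms by (auto elim: oddE)
    show ?thesis unfolding n3(2) po_add2_odd[OF n3(1,3)] n3(4-6) ..
  qed
  have A11: "(\<Prod>k\<in>{m..n+2-3}. prod_od (k+3) (n+2-1) (\<lambda>l. S (k+1) l (l+1) * R))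
     = (\<Prod>k\<in>{m..n-3}. prod_od (k+3) (n-1) (\<lambda>l. S (k+1) l (l+1) * R)) * (\<Prod>k\<in>{m..n-2}. S (k+1) ?a ?b * R)"
    using outer11[OF assms(1,4), of "\<lambda>k l. S (k+1) l (l+1) * R"] assms unfolding e12 by simp
  have A12: "prod_od m (n+2-3) (\<lambda>k. prod_od (k+3) (n+2-1) ?h) = prod_od m (n-3) (\<lambda>k. prod_od (k+3) (n-1) ?h) * prod_od m (n-3) (\<lambda>k. 1 / x ?a ?b)"
  proof -
    have m3: "3 \<le> m" using assms by simp
    show ?thesis using outer12[OF assms(1,4,2) m3, of ?h, unfolded e12] .
  qed
  define Rat where "Rat = (S 1 ?a ?b * R) * (S (m-1) ?a ?b * S (m-3) ?a ?b * R^2 / x ?a ?b) * prod_od 3 (m-4) (\<lambda>k. 1 / x ?a ?b)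
     * (\<Prod>k\<in>{2..m-4}. S k ?a ?b * R) * (S (m-2) ?a ?b * R / x ?a ?b) * (S n ?a ?b * R)
     * (\<Prod>k\<in>{m..n-2}. S (k+1) ?a ?b * R) * prod_od m (n-3) (\<lambda>k. 1 / x ?a ?b)"
  have A: "rhs4 S x R (n+2) m = rhs4 S x R n m * Rat"
    unfolding rhs4_def A3 A4 A5 A7 A9 A10 A11 A12 Rat_def by (simp only: mult_ac)
  let ?D = "d (n+1) (n+2)"
  let ?P = "\<Prod>i\<in>{1..n}-{m}. d i (n+1) * d i (n+2)"
  let ?f = "\<lambda>i. S i ?a ?b * R"
  have xD: "x ?a ?b = ?D^2" using xd[of "n+1"] by simp
  have Dp: "?D > 0" using dpos assms by simp
  have xp: "x ?a ?b > 0" unfolding xD using Dp by simp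
  have K5: "prod_od 3 (m-4) (\<lambda>k. 1 / x ?a ?b) = (1 / x ?a ?b)^p"
  proof (cases "p = 0")
    case True then show ?thesis using p by (simp add: po_empty)
  next
    case False then show ?thesis using po_const[of 3 "m-4"] p by simp
  qed
  have K12: "prod_od m (n-3) (\<lambda>k. 1 / x ?a ?b) = (1 / x ?a ?b)^q"
  proof (cases "q = 0")
    case True then show ?thesis using p q by (simp add: po_empty)
  next
    case False then show ?thesis using po_const[of m "n-3"] p q by simp
  qed
  have P11: "(\<Prod>k\<in>{m..n-2}. S (k+1) ?a ?b * R) = (\<Prod>i\<in>{m+1..n-1}. S i ?a ?b * R)"
  proof -
    have "{m+1..n-1} = {Suc m..Suc (n-2)}" using assms by auto
    then show ?thesis by (simp only: prod.shift_bounds_cl_Suc_ivl) simp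
  qed
  have "Rat = (?f 1 * (\<Prod>i\<in>{2..m-4}. ?f i) * ?f (m-3) * ?f (m-2) * ?f (m-1) * (\<Prod>i\<in>{m+1..n-1}. ?f i) * ?f n)
       * (1 / x ?a ?b)^(p+q+2)"
    unfolding Rat_def K5 K12 P11 using xp by (simp add: field_simps power_add power2_eq_square)
  also have "\<dots> = (\<Prod>i\<in>{1..n}-{m}. ?f i) * (1 / ?D^2)^(p+q+2)"
    unfolding xD using split_iv[of m n ?f] assms by simp
  also have "(\<Prod>i\<in>{1..n}-{m}. ?f i) = ?P * ?D ^ (n-1)"
  proof -
    have h: "\<forall>i\<in>{1..n}-{m}. 1 \<le> i \<and> i < n+1" by auto
    have c: "card ({1..n}-{m}) = n - 1" using assms by simp
    from collect[OF _ h] assms show ?thesis unfolding c by simp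
  qed
  also have "?P * ?D ^ (n-1) * (1 / ?D^2)^(p+q+2) = ?P * ?D"
  proof -
    have "n - 1 = 2*(p+q+2)+1" using p q by simp
    then show ?thesis using alg2[OF Dp, of ?P "p+q+2"] by simp
  qed
  finally show ?thesis using A by (simp add: mult.assoc)
qed

end

lemma pe_pair: "even a \<Longrightarrow> prod_ev a (a+1) f = f a"
proof -
  assume "even a"
  then have e: "{l\<in>{a..a+1}. even l} = {a}" by (auto simp: le_Suc_eq)
  show ?thesis unfolding prod_ev_def e by simp
qed

lemma pe_first:
  assumes "even a" "2 \<le> a" "a \<le> b"
  shows "prod_ev a b f = f a * prod_od (a+1) (b-1) (\<lambda>k. f (Suc k))"
proof -
  have e: "{l\<in>{a..b}. even l} = insert a {l\<in>{a+2..b}. even l}" using assms by (auto; presburger)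
  have "prod_ev a b f = f a * prod_ev (a+2) b f" unfolding prod_ev_def e by simp
  also have "prod_ev (a+2) b f = prod_ev (Suc (a+1)) (Suc (b-1)) f" using assms by simp
  also have "\<dots> = prod_od (a+1) (b-1) (\<lambda>k. f (Suc k))" by (rule po_shift[symmetric])
  finally show ?thesis .
qed

lemma dec1:
  fixes f :: "nat \<Rightarrow> real"
  assumes "m = 2*p+5"
  shows "(\<Prod>i\<in>{1..m-1}. f i) = f 1 * f 2 * prod_od 3 (m-4) f * prod_od 3 (m-4) (\<lambda>k. f (Suc k)) * f (m-2) * f (m-1)"
proof -
  have ms: "m-1 = 2*p+4" "m-2 = 2*p+3" "m-4 = 2*p+1" using assms by simp_all
  have t: "a \<le> b+1 \<Longrightarrow> prod f {a..b+1} = prod f {a..b} * f (b+1)" for a b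
    by (simp add: prod.cl_ivl_Suc)
  have s1: "Suc 1 = 2" "Suc 2 = 3" "2*p+2+1 = 2*p+3" "2*p+3+1 = 2*p+4" by simp_all
  have "(\<Prod>i\<in>{1..2*p+4}. f i) = f 1 * (\<Prod>i\<in>{2..2*p+4}. f i)"
    by (rule prod.atLeast_Suc_atMost[of 1 "2*p+4" f, unfolded s1]) simp
  also have "(\<Prod>i\<in>{2..2*p+4}. f i) = f 2 * (\<Prod>i\<in>{3..2*p+4}. f i)"
    by (rule prod.atLeast_Suc_atMost[of 2 "2*p+4" f, unfolded s1]) simp
  also have "(\<Prod>i\<in>{3..2*p+4}. f i) = (\<Prod>i\<in>{3..2*p+3}. f i) * f (2*p+4)"
    by (rule t[of 3 "2*p+3", unfolded s1]) simp
  also have "(\<Prod>i\<in>{3..2*p+3}. f i) = (\<Prod>i\<in>{3..2*p+2}. f i) * f (2*p+3)"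
    by (rule t[of 3 "2*p+2", unfolded s1]) simp
  also have "(\<Prod>i\<in>{3..2*p+2}. f i) = prod_ev 3 (2*p+2) f * prod_od 3 (2*p+2) f"
    by (rule pe_po_split[symmetric])
  also have "prod_od 3 (2*p+2) f = prod_od 3 (2*p+1) f"
  proof -
    have "{l\<in>{3..2*p+2}. odd l} = {l\<in>{3..2*p+1}. odd l}" by (auto simp: le_Suc_eq)
    then show ?thesis unfolding prod_od_def by simp
  qed
  also have "prod_ev 3 (2*p+2) f = prod_ev (Suc 3) (Suc (2*p+1)) f"
  proof -
    have "{l\<in>{3..2*p+2}. even l} = {l\<in>{Suc 3..Suc (2*p+1)}. even l}" by (auto simp: le_Suc_eq)
    then show ?thesis unfolding prod_ev_def by simp
  qed
  also have "\<dots> = prod_od 3 (2*p+1) (\<lambda>k. f (Suc k))" by (rule po_shift[symmetric])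
  finally show ?thesis unfolding ms by (simp only: mult_ac)
qed

definition rhs4b :: "(nat \<Rightarrow> nat \<Rightarrow> nat \<Rightarrow> real) \<Rightarrow> (nat \<Rightarrow> nat \<Rightarrow> real) \<Rightarrow> real \<Rightarrow> nat \<Rightarrow> real" where
 "rhs4b S x R m =
        S 1 2 (m-1) * S 1 2 (m+1) * R^2 / x 1 2
      * prod_ev 2 (m-2) (\<lambda>l. S 1 l (l+1) * R)
      * prod_od 3 (m-4) (\<lambda>k. S k (k+1) (m-1) * S k (k+1) (m+1) * R^2 / x k (k+1)
                              * prod_ev (k+1) (m-2) (\<lambda>l. S k l (l+1) * R / x l (l+1)))
      * prod_ev 2 (m-5) (\<lambda>k. prod_ev (k+2) (m-2) (\<lambda>l. S k l (l+1) * R))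
      * (S (m-2) (m-1) (m+1) * R)"

lemma rhs4_base: "5 \<le> m \<Longrightarrow> rhs4 S x R (m+1) m = rhs4b S x R m"
  unfolding rhs4_def rhs4b_def by (simp add: po_empty)


context cfg begin

lemma Sd: "1 \<le> p \<Longrightarrow> p < q \<Longrightarrow> q < r \<Longrightarrow> r \<le> N \<Longrightarrow> S p q r = d p q * d q r * d p r / R"
  using SR[of p q r] Rpos by (simp add: field_simps)

lemma base4_step:
  assumes mp: "m = 2*p+5" and N: "m+3 \<le> N"
  shows "rhs4b S x R (m+2) = rhs4b S x R m * ((\<Prod>i\<in>{1..m-1}. d i m * d i (m+3)) * d m (m+1) * d m (m+3) * d (m+1) (m+3))"
proof -
  have f: "m+2-1 = m+1" "m+2+1 = m+3" "m+2-2 = m" "m+2-4 = m-2" "m+2-5 = m-3" using mp by simp_all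
  have g: "m-2+2 = m" "m-2+1 = m-1" "m-1+1 = m" "m-4+2 = m-2" "m-5+2 = m-3" "m-3+2 = m-1" "m-2+1+1 = m"
    using mp by simp_all
  have par: "odd (m-2)" "odd (m-4)" "even (m-5)" "even (m-1)" using mp by simp_all
  let ?T = "m+3" and ?D' = "d (m-1) m"
  have dp: "\<And>i j. 1 \<le> i \<Longrightarrow> i < j \<Longrightarrow> j \<le> N \<Longrightarrow> d i j > 0" using dpos by blast
  have D'p: "?D' > 0" using dp[of "m-1" m] mp N by simp
  have xD': "x (m-1) m = ?D'^2" using xd[of "m-1"] g by simp
  have EA: "prod_ev 2 m (\<lambda>l. S 1 l (l+1) * R) = prod_ev 2 (m-2) (\<lambda>l. S 1 l (l+1) * R) * (S 1 (m-1) m * R)"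
    using pe_add2_odd[OF par(1), of 2 "\<lambda>l. S 1 l (l+1) * R"] g par by simp
  let ?F = "\<lambda>k. S k (k+1) (m+1) * S k (k+1) (m+3) * R^2 / x k (k+1) * prod_ev (k+1) m (\<lambda>l. S k l (l+1) * R / x l (l+1))"
  let ?Fo = "\<lambda>k. S k (k+1) (m-1) * S k (k+1) (m+1) * R^2 / x k (k+1) * prod_ev (k+1) (m-2) (\<lambda>l. S k l (l+1) * R / x l (l+1))"
  let ?rho = "\<lambda>k. d k ?T * d (k+1) ?T * d k m / (d (k+1) (m-1) * ?D')"
  have EB1: "prod_od 3 (m-2) ?F = prod_od 3 (m-4) ?F * ?F (m-2)"
  proof -
    have c: "3 \<le> m-4+2" using mp by simp
    have g2: "Suc (m-2) = m-1" using mp by simp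
    show ?thesis using po_add2_odd[OF par(2) c, of ?F, unfolded g] g2 by simp
  qed
  have Fk: "?F k = ?Fo k * ?rho k" if k: "k \<in> {l\<in>{3..m-4}. odd l}" for k
  proof -
    have k1: "3 \<le> k" "k \<le> m-4" using k by auto
    have pe: "prod_ev (k+1) m (\<lambda>l. S k l (l+1) * R / x l (l+1)) = prod_ev (k+1) (m-2) (\<lambda>l. S k l (l+1) * R / x l (l+1)) * (S k (m-1) m * R / x (m-1) m)"
    proof -
      have c: "k+1 \<le> m-2+1" using k1 by simp
      show ?thesis using pe_add2_odd[OF par(1) c, of "\<lambda>l. S k l (l+1) * R / x l (l+1)", unfolded g] by simp
    qed
    have s1: "S k (k+1) ?T = d k (k+1) * d (k+1) ?T * d k ?T / R" using k1 mp N by (intro Sd) auto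
    have s2: "S k (m-1) m = d k (m-1) * ?D' * d k m / R" using k1 mp N by (intro Sd) auto
    have s3: "S k (k+1) (m-1) = d k (k+1) * d (k+1) (m-1) * d k (m-1) / R" using k1 mp N by (intro Sd) auto
    have q1: "d k (k+1) > 0" using dp[of k "k+1"] k1 mp N by simp
    have q2: "d (k+1) (m-1) > 0" using dp[of "k+1" "m-1"] k1 mp N by simp
    have q3: "d k (m-1) > 0" using dp[of k "m-1"] k1 mp N by simp
    have q4: "x k (k+1) > 0" using xd[of k] q1 by simp
    note p1 = q1 q2 q3 q4
    show ?thesis unfolding pe s1 s2 s3 xD' using p1 D'p Rpos by (simp add: field_simps power2_eq_square)
  qed
  have EB2: "prod_od 3 (m-4) ?F = prod_od 3 (m-4) ?Fo * prod_od 3 (m-4) ?rho"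
  proof -
    have "prod_od 3 (m-4) ?F = prod_od 3 (m-4) (\<lambda>k. ?Fo k * ?rho k)"
      unfolding prod_od_def[of 3] using Fk by (intro prod.cong) auto
    then show ?thesis by (simp only: po_mult)
  qed
  let ?OT = "prod_od 3 (m-4) (\<lambda>k. d k ?T)" and ?ET = "prod_od 3 (m-4) (\<lambda>k. d (Suc k) ?T)"
  let ?OM = "prod_od 3 (m-4) (\<lambda>k. d k m)" and ?EM = "prod_od 3 (m-4) (\<lambda>k. d (Suc k) m)"
  let ?E1 = "prod_od 3 (m-4) (\<lambda>k. d (Suc k) (m-1))"
  have EB3: "prod_od 3 (m-4) ?rho = ?OT * ?ET * ?OM / (?E1 * ?D'^p)"
  proof -
    have "prod_od 3 (m-4) ?rho = prod_od 3 (m-4) (\<lambda>k. d k ?T * d (k+1) ?T * d k m) / prod_od 3 (m-4) (\<lambda>k. d (k+1) (m-1) * ?D')"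
      unfolding prod_od_def by (rule prod_dividef)
    also have "\<dots> = ?OT * ?ET * ?OM / (?E1 * ?D'^p)"
    proof -
      have K: "prod_od 3 (m-4) (\<lambda>k. ?D') = ?D'^p"
      proof (cases "p = 0")
        case True then show ?thesis using mp by (simp add: po_empty)
      next
        case False then show ?thesis using po_const[of 3 "m-4" ?D'] mp by simp
      qed
      show ?thesis by (simp only: po_mult K Suc_eq_plus1)
    qed
    finally show ?thesis .
  qed
  have FL: "?F (m-2) = S (m-2) (m-1) (m+1) * S (m-2) (m-1) ?T * R^2 / x (m-2) (m-1) * (S (m-2) (m-1) m * R / x (m-1) m)"
    using pe_pair[OF par(4), of "\<lambda>l. S (m-2) l (l+1) * R / x l (l+1)"] g by simp
  let ?G = "\<lambda>k. prod_ev (k+2) m (\<lambda>l. S k l (l+1) * R)"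
  let ?Go = "\<lambda>k. prod_ev (k+2) (m-2) (\<lambda>l. S k l (l+1) * R)"
  have EC1: "prod_ev 2 (m-3) ?G = prod_ev 2 (m-5) ?G * ?G (m-3)"
  proof -
    have c: "2 \<le> m-5+2" by simp
    have g3: "Suc (Suc (m-3)) = m-1" using mp by simp
    show ?thesis using pe_add2_even[OF par(3) c, of ?G, unfolded g] g3 by simp
  qed
  have EC2: "?G (m-3) = S (m-3) (m-1) m * R"
    using pe_pair[OF par(4), of "\<lambda>l. S (m-3) l (l+1) * R"] g by simp
  have EC3: "prod_ev 2 (m-5) ?G = prod_ev 2 (m-5) ?Go * prod_ev 2 (m-5) (\<lambda>k. S k (m-1) m * R)"
  proof -
    have "prod_ev 2 (m-5) ?G = prod_ev 2 (m-5) (\<lambda>k. ?Go k * (S k (m-1) m * R))"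
      unfolding prod_ev_def[of 2]
    proof (rule prod.cong[OF refl])
      fix k assume "k \<in> {l\<in>{2..m-5}. even l}"
      then have k1: "2 \<le> k" "k \<le> m-5" by auto
      show "?G k = ?Go k * (S k (m-1) m * R)"
      proof -
        have c: "k+2 \<le> m-2+1" using k1 by simp
        show ?thesis using pe_add2_odd[OF par(1) c, of "\<lambda>l. S k l (l+1) * R", unfolded g] by simp
      qed
    qed
    then show ?thesis by (simp only: pe_mult)
  qed
  have EC4: "prod_ev 2 (m-5) (\<lambda>k. S k (m-1) m * R) * (S (m-3) (m-1) m * R) = prod_ev 2 (m-3) (\<lambda>k. S k (m-1) m * R)"
  proof -
    have c: "2 \<le> m-5+2" by simp
    show ?thesis using pe_add2_even[OF par(3) c, of "\<lambda>k. S k (m-1) m * R", unfolded g] by simp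
  qed
  have EC5: "prod_ev 2 (m-3) (\<lambda>k. S k (m-1) m * R) = (d 2 (m-1) * ?E1) * (d 2 m * ?EM) * ?D'^(p+1)"
  proof -
    have "prod_ev 2 (m-3) (\<lambda>k. S k (m-1) m * R) = prod_ev 2 (m-3) (\<lambda>k. d k (m-1) * d k m * ?D')"
      unfolding prod_ev_def
    proof (rule prod.cong[OF refl])
      fix k assume "k \<in> {l\<in>{2..m-3}. even l}"
      then have k1: "2 \<le> k" "k \<le> m-3" by auto
      show "S k (m-1) m * R = d k (m-1) * d k m * ?D'" using SR[of k "m-1" m] k1 mp N by simp
    qed
    also have "\<dots> = prod_ev 2 (m-3) (\<lambda>k. d k (m-1)) * prod_ev 2 (m-3) (\<lambda>k. d k m) * ?D'^(p+1)"
      using pe_const[of 2 "m-3" ?D'] mp by (simp add: pe_mult)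
    also have "prod_ev 2 (m-3) (\<lambda>k. d k (m-1)) = d 2 (m-1) * ?E1"
      using pe_first[of 2 "m-3" "\<lambda>k. d k (m-1)"] mp by simp
    also have "prod_ev 2 (m-3) (\<lambda>k. d k m) = d 2 m * ?EM"
      using pe_first[of 2 "m-3" "\<lambda>k. d k m"] mp by simp
    finally show ?thesis .
  qed
  have EC: "prod_ev 2 (m-3) ?G = prod_ev 2 (m-5) ?Go * ((d 2 (m-1) * ?E1) * (d 2 m * ?EM) * ?D'^(p+1))"
  proof -
    have "prod_ev 2 (m-3) ?G = prod_ev 2 (m-5) ?Go * (prod_ev 2 (m-5) (\<lambda>k. S k (m-1) m * R) * (S (m-3) (m-1) m * R))"
      unfolding EC1 EC2 EC3 by (simp only: mult.assoc)
    also have "\<dots> = prod_ev 2 (m-5) ?Go * ((d 2 (m-1) * ?E1) * (d 2 m * ?EM) * ?D'^(p+1))"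
      unfolding EC4 EC5 ..
    finally show ?thesis .
  qed
  have EB: "prod_od 3 (m-2) ?F = prod_od 3 (m-4) ?Fo * (?OT * ?ET * ?OM / (?E1 * ?D'^p))
      * (S (m-2) (m-1) (m+1) * S (m-2) (m-1) ?T * R^2 / x (m-2) (m-1) * (S (m-2) (m-1) m * R / x (m-1) m))"
    unfolding EB1 EB2 EB3 FL ..
  have L: "rhs4b S x R (m+2) = S 1 2 (m+1) * S 1 2 (m+3) * R^2 / x 1 2 * prod_ev 2 m (\<lambda>l. S 1 l (l+1) * R)
      * prod_od 3 (m-2) ?F * prod_ev 2 (m-3) ?G * (S m (m+1) (m+3) * R)"
    unfolding rhs4b_def f ..
  have O: "rhs4b S x R m = S 1 2 (m-1) * S 1 2 (m+1) * R^2 / x 1 2 * prod_ev 2 (m-2) (\<lambda>l. S 1 l (l+1) * R)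
      * prod_od 3 (m-4) ?Fo * prod_ev 2 (m-5) ?Go * (S (m-2) (m-1) (m+1) * R)"
    unfolding rhs4b_def ..
  have Q: "(\<Prod>i\<in>{1..m-1}. d i m * d i (m+3)) = (d 1 m * d 2 m * ?OM * ?EM * d (m-2) m * ?D')
      * (d 1 ?T * d 2 ?T * ?OT * ?ET * d (m-2) ?T * d (m-1) ?T)"
    unfolding prod.distrib dec1[OF mp, of "\<lambda>i. d i m"] dec1[OF mp, of "\<lambda>i. d i ?T"] ..
  have pos1: "\<And>i j. 1 \<le> i \<Longrightarrow> i < j \<Longrightarrow> j \<le> m+3 \<Longrightarrow> d i j > 0" using dp N by simp
  have E1p: "?E1 > 0" unfolding prod_od_def using pos1 mp by (intro prod_pos) auto
  have s1: "S 1 2 (m-1) = d 1 2 * d 2 (m-1) * d 1 (m-1) / R" using mp N by (intro Sd) auto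
  have s2: "S 1 2 ?T = d 1 2 * d 2 ?T * d 1 ?T / R" using mp N by (intro Sd) auto
  have s3: "S 1 (m-1) m = d 1 (m-1) * ?D' * d 1 m / R" using mp N by (intro Sd) auto
  have s4: "S (m-2) (m-1) (m+1) = d (m-2) (m-1) * d (m-1) (m+1) * d (m-2) (m+1) / R" using mp N by (intro Sd) auto
  have s5: "S (m-2) (m-1) ?T = d (m-2) (m-1) * d (m-1) ?T * d (m-2) ?T / R" using mp N by (intro Sd) auto
  have s6: "S (m-2) (m-1) m = d (m-2) (m-1) * ?D' * d (m-2) m / R" using mp N by (intro Sd) auto
  have s7: "S m (m+1) ?T = d m (m+1) * d (m+1) ?T * d m ?T / R" using mp N by (intro Sd) auto
  have x1: "x (m-2) (m-1) = d (m-2) (m-1) ^ 2" using xd[of "m-2"] g by simp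
  have x12: "x 1 2 = d 1 2 ^ 2" using xd[of 1] by (simp add: numeral_2_eq_2)
  have pp: "d 1 2 > 0" "d 2 (m-1) > 0" "d 1 (m-1) > 0" "d (m-2) (m-1) > 0" "d (m-1) (m+1) > 0" "d (m-2) (m+1) > 0"
    using pos1 mp by auto
  have pw: "?D'^(p+1) = ?D'^p * ?D'" by simp
  show ?thesis unfolding L O Q EB EC EA s1 s2 s3 s4 s5 s6 s7 x1 xD' x12 pw
    using pp D'p E1p Rpos by (simp add: field_simps power2_eq_square)
qed

end

lemma QS_iv:
  assumes "1 \<le> m"
  shows "QS d ({1..m+3}-{m+2}) = QS d ({1..m+1}-{m}) * ((\<Prod>i\<in>{1..m-1}. d i m * d i (m+3)) * d m (m+1) * d m (m+3) * d (m+1) (m+3))"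
proof -
  let ?X = "{1..m-1}"
  have e1: "{1..m+3}-{m+2} = insert (m+3) (insert (m+1) (insert m ?X))" using assms by auto
  have e2: "{1..m+1}-{m} = insert (m+1) ?X" using assms by auto
  have q1: "QS d (insert (m+3) (insert (m+1) (insert m ?X))) = QS d (insert (m+1) (insert m ?X)) * (\<Prod>i\<in>insert (m+1) (insert m ?X). d i (m+3))"
    by (rule QS_top) auto
  have q2: "QS d (insert (m+1) (insert m ?X)) = QS d (insert m ?X) * (\<Prod>i\<in>insert m ?X. d i (m+1))"
    by (rule QS_top) auto
  have q3: "QS d (insert m ?X) = QS d ?X * (\<Prod>i\<in>?X. d i m)"
    by (rule QS_top) auto
  have q4: "QS d (insert (m+1) ?X) = QS d ?X * (\<Prod>i\<in>?X. d i (m+1))"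
    by (rule QS_top) auto
  have n1: "m \<notin> ?X" "m+1 \<notin> insert m ?X" using assms by auto
  have p1: "(\<Prod>i\<in>insert (m+1) (insert m ?X). d i (m+3)) = d (m+1) (m+3) * (d m (m+3) * (\<Prod>i\<in>?X. d i (m+3)))"
    using n1 by (simp add: prod.insert)
  have p2: "(\<Prod>i\<in>insert m ?X. d i (m+1)) = d m (m+1) * (\<Prod>i\<in>?X. d i (m+1))"
    using n1 by (simp add: prod.insert)
  show ?thesis unfolding e1 e2 q1 q2 q3 q4 p1 p2 prod.distrib by (simp only: mult_ac)
qed

lemma pe23: "prod_ev 2 3 f = f 2"
  using pe_add2_odd[of 1 2 f] by (simp add: pe_empty numeral_3_eq_3 numeral_2_eq_2)

context cfg begin

lemma diag4':
  "2*p+6 \<le> N \<Longrightarrow> QS d ({1..2*p+6}-{2*p+5}) = rhs4b S x R (2*p+5)"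
proof (induction p)
  case 0
  have e: "{1..2*0+6}-{2*0+5::nat} = insert 6 (insert 4 (insert 3 (insert 2 {1})))" by auto
  have q: "QS d (insert 6 (insert 4 (insert 3 (insert 2 {1})))) = d 1 2 * (d 1 3 * d 2 3) * (d 1 4 * d 2 4 * d 3 4) * (d 1 6 * d 2 6 * d 3 6 * d 4 6)"
    using QS_top[of "insert 4 (insert 3 (insert 2 {1}))" 6 d] QS_top[of "insert 3 (insert 2 {1})" 4 d]
      QS_top[of "insert 2 {1}" 3 d] QS_top[of "{1}" 2 d] QS_one[of d] by (simp add: mult_ac)
  have r: "rhs4b S x R (2*0+5) = S 1 2 4 * S 1 2 6 * R^2 / x 1 2 * (S 1 2 3 * R) * (S 3 4 6 * R)"
    unfolding rhs4b_def by (simp add: pe23 po_empty pe_empty)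
  have N6: "6 \<le> N" using 0 by simp
  have s1: "S 1 2 4 = d 1 2 * d 2 4 * d 1 4 / R" using N6 by (intro Sd) auto
  have s2: "S 1 2 6 = d 1 2 * d 2 6 * d 1 6 / R" using N6 by (intro Sd) auto
  have s3: "S 1 2 3 = d 1 2 * d 2 3 * d 1 3 / R" using N6 by (intro Sd) auto
  have s4: "S 3 4 6 = d 3 4 * d 4 6 * d 3 6 / R" using N6 by (intro Sd) auto
  have x12: "x 1 2 = d 1 2 ^ 2" using xd[of 1] by (simp add: numeral_2_eq_2)
  have pp: "d 1 2 > 0" using dpos[of 1 2] N6 by simp
  show ?case unfolding e q r s1 s2 s3 s4 x12 using pp Rpos by (simp add: field_simps power2_eq_square)
next
  case (Suc p)
  let ?m = "2*p+5"
  have h6: "2*p+6 \<le> N" using Suc.prems by simp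
  note IH = Suc.IH[OF h6]
  have a: "?m+1 = 2*p+6" by simp
  have e: "2 * Suc p + 6 = ?m+3" "2 * Suc p + 5 = ?m + 2" by simp_all
  have st: "rhs4b S x R (?m+2) = rhs4b S x R ?m * ((\<Prod>i\<in>{1..?m-1}. d i ?m * d i (?m+3)) * d ?m (?m+1) * d ?m (?m+3) * d (?m+1) (?m+3))"
    using base4_step[of ?m p] Suc.prems by simp
  have q: "QS d ({1..?m+3}-{?m+2}) = QS d ({1..?m+1}-{?m}) * ((\<Prod>i\<in>{1..?m-1}. d i ?m * d i (?m+3)) * d ?m (?m+1) * d ?m (?m+3) * d (?m+1) (?m+3))"
    by (rule QS_iv) simp
  show ?case unfolding e q[unfolded a] st[unfolded a] IH ..
qed

lemma diag4:
  assumes "m = 2*p+5" "m+1 \<le> N"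
  shows "QS d ({1..m+1}-{m}) = rhs4b S x R m"
proof -
  have a: "2*p+5+1 = 2*p+6" by simp
  show ?thesis unfolding assms(1) a by (rule diag4') (use assms in simp)
qed

lemma case4:
  assumes "even n" "odd m" "5 \<le> m" "m + 1 \<le> n" "n \<le> N"
  shows "QS d ({1..n}-{m}) = rhs4 S x R n m"
proof -
  obtain k where k: "m = 2*k+1" using assms(2) by (auto elim: oddE)
  define p where "p = k - 2"
  have p: "m = 2*p+5" using k assms(3) unfolding p_def by simp
  have "even (n - m - 1)" using assms by auto
  then obtain t where t0: "n - m - 1 = 2*t" by blast
  have t: "n = m + 1 + 2*t" using t0 assms by simp
  have "m + 1 + 2*t \<le> N \<longrightarrow> QS d ({1..m+1+2*t}-{m}) = rhs4 S x R (m+1+2*t) m" for t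
  proof (induction t)
    case 0
    show ?case using diag4[OF p] rhs4_base[of m S x R] assms by simp
  next
    case (Suc t)
    show ?case
    proof
      assume h: "m + 1 + 2 * Suc t \<le> N"
      have e: "m + 1 + 2 * Suc t = (m + 1 + 2*t) + 2" by simp
      have "QS d ({1..m + 1 + 2 * Suc t}-{m}) = QS d ({1..m+1+2*t}-{m}) * (\<Prod>i\<in>{1..m+1+2*t}-{m}. d i (m+1+2*t+1) * d i (m+1+2*t+2)) * d (m+1+2*t+1) (m+1+2*t+2)"
        unfolding e by (rule QS_step) auto
      also have "\<dots> = rhs4 S x R (m + 1 + 2 * Suc t) m"
        unfolding e using Suc.IH h step4[of "m+1+2*t" m] assms by simp
      finally show "QS d ({1..m + 1 + 2 * Suc t}-{m}) = rhs4 S x R (m + 1 + 2 * Suc t) m" .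
    qed
  qed
  then show ?thesis using t assms by simp
qed

end

theorem proposition3p8:
  fixes A :: "nat \<Rightarrow> real \<times> real" and n :: nat and R :: real
  assumes "even n" and "n > 4" and "cyclic_anticlockwise A n R"
  shows
   "(\<forall>m. even m \<and> 2 \<le> m \<and> m \<le> n \<longrightarrow>
      delta_m A n m =
        R ^ ((n - 2) div 2)
      * (\<Prod>k\<in>{1..m-1}. prod_ev (k+1) (m-1) (\<lambda>l. Sar A k l (l+1))
                         * prod_od (m+1) (n-1) (\<lambda>l. Sar A k l (l+1)))
      * (\<Prod>k\<in>{m..n-3}. prod_od (k+2) (n-1) (\<lambda>l. Sar A (k+1) l (l+1)))
      * prod_ev 2 (m-1) (\<lambda>k. prod_ev (k+1) (m-1) (\<lambda>l. R^2 / xsq A l (l+1)))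
      * prod_ev m (n-3) (\<lambda>k. prod_od (k+2) (n-1) (\<lambda>l. R^2 / xsq A l (l+1)))
      * prod_od (m+1) (n-1) (\<lambda>l. R^(m-2) / xsq A l (l+1) ^ ((m-2) div 2)))
  \<and> delta_m A n 1 =
        (\<Prod>k\<in>{1..n-3}. prod_od (k+2) (n-1) (\<lambda>l. Sar A (k+1) l (l+1) * R))
      * prod_ev 2 (n-3) (\<lambda>k. prod_od (k+2) (n-1) (\<lambda>l. 1 / xsq A l (l+1)))
  \<and> delta_m A n 3 =
        Sar A 1 2 4 * R
      * prod_od 5 (n-1) (\<lambda>l. Sar A 1 l (l+1) * Sar A 2 l (l+1) * R^2)
      * (\<Prod>k\<in>{3..n-3}. prod_od (k+2) (n-1) (\<lambda>l. Sar A (k+1) l (l+1) * R))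
      * prod_od 3 (n-3) (\<lambda>k. prod_od (k+2) (n-1) (\<lambda>l. 1 / xsq A l (l+1)))
  \<and> (\<forall>m. odd m \<and> 3 < m \<and> m \<le> n - 1 \<longrightarrow>
      delta_m A n m =
        Sar A 1 2 (m-1) * Sar A 1 2 (m+1) * R^2 / xsq A 1 2
      * prod_ev 2 (m-2) (\<lambda>l. Sar A 1 l (l+1) * R)
      * prod_od (m+2) (n-1) (\<lambda>l. Sar A 1 l (l+1) * R)
      * prod_od (m+2) (n-1) (\<lambda>l. Sar A (m-1) l (l+1) * Sar A (m-3) l (l+1) * R^2 / xsq A l (l+1))
      * prod_od 3 (m-4) (\<lambda>k. Sar A k (k+1) (m-1) * Sar A k (k+1) (m+1) * R^2 / xsq A k (k+1)
                              * prod_ev (k+1) (m-2) (\<lambda>l. Sar A k l (l+1) * R / xsq A l (l+1))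
                              * prod_od (m+2) (n-1) (\<lambda>l. 1 / xsq A l (l+1)))
      * prod_ev 2 (m-5) (\<lambda>k. prod_ev (k+2) (m-2) (\<lambda>l. Sar A k l (l+1) * R))
      * (\<Prod>k\<in>{2..m-4}. prod_od (m+2) (n-1) (\<lambda>l. Sar A k l (l+1) * R))
      * Sar A (m-2) (m-1) (m+1) * R
      * prod_od (m+2) (n-1) (\<lambda>l. Sar A (m-2) l (l+1) * R / xsq A l (l+1))
      * prod_od m (n-3) (\<lambda>k. Sar A (k+1) (k+2) (k+3) * R)
      * (\<Prod>k\<in>{m..n-3}. prod_od (k+3) (n-1) (\<lambda>l. Sar A (k+1) l (l+1) * R))
      * prod_od m (n-3) (\<lambda>k. prod_od (k+3) (n-1) (\<lambda>l. 1 / xsq A l (l+1))))"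
proof -
  note G = geo[OF assms(3)]
  interpret cfg "dl A" "Sar A" "xsq A" R n
  proof
    show "R > 0" using G(1) .
    show "\<And>p q. 1 \<le> p \<Longrightarrow> p < q \<Longrightarrow> q \<le> n \<Longrightarrow> dl A p q > 0" using G(2) by blast
    show "\<And>p q r. 1 \<le> p \<Longrightarrow> p < q \<Longrightarrow> q < r \<Longrightarrow> r \<le> n \<Longrightarrow> Sar A p q r * R = dl A p q * dl A q r * dl A p r"
      using G(3) by blast
    show "\<And>l. xsq A l (l+1) = (dl A l (l+1))^2" using G(4) by blast
  qed
  have n1: "n \<ge> 1" using assms by simp
  have I: "delta_m A n m = rhs1 (Sar A) (xsq A) R n m" if "even m \<and> 2 \<le> m \<and> m \<le> n" for m
    using case1[of n m] that assms delta_QS[OF n1, of A m] by simp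
  have II: "delta_m A n 1 = rhs2 (Sar A) (xsq A) R n"
    using case2[of n] assms delta_QS[OF n1, of A 1] by simp
  have III: "delta_m A n 3 = rhs3 (Sar A) (xsq A) R n"
    using case3[of n] assms delta_QS[OF n1, of A 3] by simp
  have IV: "delta_m A n m = rhs4 (Sar A) (xsq A) R n m" if "odd m \<and> 3 < m \<and> m \<le> n - 1" for m
  proof -
    have m5: "5 \<le> m" using that by (auto elim!: oddE)
    have "m \<le> n - 1" using that by simp
    then have m1: "m + 1 \<le> n" using assms(2) by linarith
    have "QS (dl A) ({1..n}-{m}) = rhs4 (Sar A) (xsq A) R n m"
      using case4[OF assms(1) _ m5 m1 order_refl] that by simp
    then show ?thesis using delta_QS[OF n1, of A m] by simp
  qed
  show ?thesis
    using I II III IV unfolding rhs1_def rhs2_def rhs3_def rhs4_def by blast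
qed

end
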